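(* Let $E,F$ be Polish spaces, $(P_x)_{x\in F}$ Markov kernels on $E$ with $(x,y)\mapsto P_x(y,A)$ measurable for each Borel $A$, and $X=(X_t)_{t\in\mathbb{Z}}$ an $F$-valued process on $(\Omega,\mathcal{A},\mathbb{P})$. Assume (A1) $X$ is stationary; (A2) there exist measurable $V:E\to(0,\infty)$ and measurable $\lambda,b:F\to\mathbb{R}_+$ with $\mathbb{E}\log^+\lambda(X_0)<\infty$, $\mathbb{E}\log^+b(X_0)<\infty$, $P_xV\le\lambda(x)V+b(x)$ for all $x\in F$, and $\limsup_n\big(\prod_{i=1}^n\lambda(X_{-i})\big)^{1/n}<1$ a.s.; (A3) there exists a measurable $\eta:(0,\infty)\times F\to(0,1)$ such that for each $R>0$ there is a probability kernel $\nu_R$ from $F$ to $E$ with $P_x(y,A)\ge\eta(R,x)\nu_R(x,A)$ for all $x\in F$, $y$ with $V(y)\le R$, and Borel $A$. For $t\in\mathbb{Z}$ let $\xi_t=(X_{t-j})_{j\ge0}\in F^{\mathbb{N}}$. For positive integers $C_1,C_2$ and $C=(C_1,C_2)$ define $$A_{1,C_1}=\Big\{x\in F^{\mathbb{N}}:\ \sup_{j\ge C_1}\prod_{i=1}^j\lambda(x_i)\le 1-\tfrac1{C_1},\ \ b(x_1)+\sum_{i\ge2}\prod_{k=1}^{i-1}\lambda(x_k)\,b(x_i)\le C_1\Big\},$$ $$A_{2,C}=\big\{x\in F^{\mathbb{N}}:\ \eta\big(2C_1(2C_1+1),x_0\big)\ge 1/(C_2+1)\big\},\qquad A_C=A_{1,C_1}\cap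 A_{2,C},$$ and $\rho_C=\mathbb{P}(\xi_0\in A_C\mid X^{-1}(\mathcal{I}))$. Then: 1. $\mathbb{P}\big(\xi_0\in\bigcup_{C_1\ge1}A_{1,C_1}\big)=1$. 2. There exists a pair $C=(C_1,C_2)$ of random variables with values in the positive integers such that for $\mathbb{P}$-almost all $\omega\in\Omega$, $$\lim_{n\to\infty}\frac1n\sum_{i=0}^n\mathbf{1}_{A_{C(\omega)}}(\xi_i(\omega))=\lim_{n\to\infty}\frac1n\sum_{i=1}^n\mathbf{1}_{A_{C(\omega)}}(\xi_{-i}(\omega))=\rho_{C(\omega)}(\omega)>0.$$
   Context: $\log^+(u)=\log(\max(u,1))$. $\mathcal{I}$ is the collection of measurable subsets $I$ of $F^{\mathbb{Z}}$ invariant under the shift $\theta$ (where $(\theta x)_t=x_{t+1}$), i.e. $\theta^{-1}I=I$, and $X^{-1}(\mathcal{I})=\{\{X\in I\}:I\in\mathcal{I}\}$. Coordinates of $x\in F^{\mathbb{N}}$ are $x=(x_0,x_1,\ldots)$, so $(\xi_t)_j=X_{t-j}$. *)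

theory Defs
  imports "HOL-Probability.Probability"
begin

definition logp :: "real \<Rightarrow> real" where
  "logp u = ln (max u 1)"

definition stationary :: "'a measure \<Rightarrow> (int \<Rightarrow> 'a \<Rightarrow> 'f::topological_space) \<Rightarrow> bool" where
  "stationary M X \<longleftrightarrow>
     (\<forall>J s. finite J \<longrightarrow>
        distr M (Pi\<^sub>M J (\<lambda>_. borel)) (\<lambda>\<omega>. \<lambda>j\<in>J. X (j + s) \<omega>)
      = distr M (Pi\<^sub>M J (\<lambda>_. borel)) (\<lambda>\<omega>. \<lambda>j\<in>J. X j \<omega>))"

definition shiftZ :: "(int \<Rightarrow> 'f) \<Rightarrow> (int \<Rightarrow> 'f)" where
  "shiftZ x = (\<lambda>t. x (t + 1))"

definition inv_sets :: "(int \<Rightarrow> 'f::topological_space) set set" where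
  "inv_sets = {I. I \<in> sets (Pi\<^sub>M UNIV (\<lambda>_::int. (borel :: 'f measure))) \<and> shiftZ -` I = I}"

definition inv_sigma :: "'a measure \<Rightarrow> (int \<Rightarrow> 'a \<Rightarrow> 'f::topological_space) \<Rightarrow> 'a measure" where
  "inv_sigma M X = sigma (space M) {{\<omega> \<in> space M. (\<lambda>t. X t \<omega>) \<in> I} | I. I \<in> inv_sets}"

definition xi :: "(int \<Rightarrow> 'a \<Rightarrow> 'f) \<Rightarrow> int \<Rightarrow> 'a \<Rightarrow> (nat \<Rightarrow> 'f)" where
  "xi X t \<omega> = (\<lambda>j. X (t - int j) \<omega>)"

text \<open>A_{1,C1}; the supremum condition is written as a bound on all terms, and the
  series of nonnegative terms is taken in the extended nonnegative reals.\<close>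
definition A1 :: "('f \<Rightarrow> real) \<Rightarrow> ('f \<Rightarrow> real) \<Rightarrow> nat \<Rightarrow> (nat \<Rightarrow> 'f) set" where
  "A1 lam b C1 = {x.
      (\<forall>j\<ge>C1. (\<Prod>i=1..j. lam (x i)) \<le> 1 - 1 / real C1) \<and>
      ennreal (b (x 1)) + (\<Sum>i. ennreal ((\<Prod>k=1..i+1. lam (x k)) * b (x (i + 2))))
        \<le> ennreal (real C1)}"

definition A2 :: "(real \<Rightarrow> 'f \<Rightarrow> real) \<Rightarrow> nat \<Rightarrow> nat \<Rightarrow> (nat \<Rightarrow> 'f) set" where
  "A2 eta C1 C2 = {x. eta (2 * real C1 * (2 * real C1 + 1)) (x 0) \<ge> 1 / (real C2 + 1)}"

definition AC :: "('f \<Rightarrow> real) \<Rightarrow> ('f \<Rightarrow> real) \<Rightarrow> (real \<Rightarrow> 'f \<Rightarrow> real) \<Rightarrow> nat \<Rightarrow> nat \<Rightarrow> (nat \<Rightarrow> 'f) set" where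
  "AC lam b eta C1 C2 = A1 lam b C1 \<inter> A2 eta C1 C2"

text \<open>rho_C = P(xi_0 \<in> A_C | X^{-1}(I)) (a fixed version of the conditional probability).\<close>
definition rhoC :: "'a measure \<Rightarrow> (int \<Rightarrow> 'a \<Rightarrow> 'f::topological_space) \<Rightarrow> ('f \<Rightarrow> real) \<Rightarrow> ('f \<Rightarrow> real)
    \<Rightarrow> (real \<Rightarrow> 'f \<Rightarrow> real) \<Rightarrow> nat \<Rightarrow> nat \<Rightarrow> 'a \<Rightarrow> real" where
  "rhoC M X lam b eta C1 C2 =
     real_cond_exp M (inv_sigma M X) (\<lambda>\<omega>. indicator (AC lam b eta C1 C2) (xi X 0 \<omega>))"

end

theory Submission
  imports Defs
begin

definition bS :: "('a \<Rightarrow> 'a) \<Rightarrow> ('a \<Rightarrow> real) \<Rightarrow> nat \<Rightarrow> 'a \<Rightarrow> real" where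
  "bS T h k x = (\<Sum>i<k. h ((T^^i) x))"

fun bM :: "('a \<Rightarrow> 'a) \<Rightarrow> ('a \<Rightarrow> real) \<Rightarrow> nat \<Rightarrow> 'a \<Rightarrow> real" where
  "bM T h 0 x = 0"
| "bM T h (Suc n) x = max (bM T h n x) (bS T h (Suc n) x)"

lemma bS_0[simp]: "bS T h 0 x = 0" by (simp add: bS_def)

lemma bS_Suc: "bS T h (Suc k) x = h x + bS T h k (T x)"
  unfolding bS_def by (subst sum.lessThan_Suc_shift) (simp add: funpow_Suc_right del: funpow.simps)

lemma bM_ge: "k \<le> n \<Longrightarrow> bS T h k x \<le> bM T h n x"
proof (induction n)
  case 0 then show ?case by simp
next
  case (Suc n) then show ?case by (cases "k = Suc n") auto
qed

lemma bM_att: "\<exists>k\<le>n. bM T h n x = bS T h k x"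
proof (induction n)
  case 0 then show ?case by (intro exI[of _ 0]) simp
next
  case (Suc n)
  then obtain k where "k \<le> n" "bM T h n x = bS T h k x" by auto
  then show ?case by (cases "bM T h n x \<le> bS T h (Suc n) x") (auto intro: exI[of _ "Suc n"] exI[of _ k])
qed

lemma bM_nonneg: "0 \<le> bM T h n x"
  using bM_ge[of 0 n T h x] by simp

lemma bM_pos_iff: "bM T h n x > 0 \<longleftrightarrow> (\<exists>k\<le>n. bS T h k x > 0)"
proof
  assume a: "bM T h n x > 0"
  from bM_att[of n T h x] obtain k where k: "k \<le> n \<and> bM T h n x = bS T h k x" ..
  then show "\<exists>k\<le>n. bS T h k x > 0" using a by (intro exI[of _ k]) simp
next
  assume "\<exists>k\<le>n. bS T h k x > 0"
  then obtain k where k: "k \<le> n" "bS T h k x > 0" by blast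
  have "bS T h k x \<le> bM T h n x" by (rule bM_ge[OF k(1)])
  then show "bM T h n x > 0" using k(2) by linarith
qed

lemma bM_key: "indicator {y. bM T h n y > 0} x * h x \<ge> bM T h n x - bM T h n (T x)"
proof (cases "bM T h n x > 0")
  case True
  from bM_att[of n T h x] obtain k where kk: "k \<le> n \<and> bM T h n x = bS T h k x" ..
  then have k: "k \<le> n" "bM T h n x = bS T h k x" by simp_all
  with True have "k \<noteq> 0" by (cases k) auto
  then obtain j where j: "k = Suc j" by (cases k) auto
  have "bS T h j (T x) \<le> bM T h n (T x)" using k j by (intro bM_ge) auto
  then show ?thesis using True k j by (simp add: bS_Suc indicator_def)
next
  case False
  then show ?thesis using bM_nonneg[of T h n "T x"] bM_nonneg[of T h n x] by (simp add: indicator_def)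
qed

lemma measurable_funpow:
  assumes "T \<in> measurable N N" shows "(T^^i) \<in> measurable N N"
proof (induction i)
  case 0 then show ?case by simp
next
  case (Suc i)
  have "T^^Suc i = T \<circ> (T^^i)" by simp
  then show ?case using measurable_comp[OF Suc.IH assms] by (simp add: comp_def)
qed

lemma bS_meas:
  assumes "T \<in> measurable N N" "h \<in> borel_measurable N"
  shows "bS T h k \<in> borel_measurable N"
proof -
  have "(\<lambda>x. h ((T^^i) x)) \<in> borel_measurable N" for i
    using measurable_comp[OF measurable_funpow[OF assms(1)] assms(2)] by (simp add: comp_def)
  then show ?thesis unfolding bS_def by (intro borel_measurable_sum) auto
qed

lemma bM_meas:
  assumes "T \<in> measurable N N" "h \<in> borel_measurable N"
  shows "bM T h n \<in> borel_measurable N"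
  by (induction n) (auto intro!: borel_measurable_max bS_meas assms)

lemma bS_bound:
  assumes "\<And>y. \<bar>h y\<bar> \<le> K" shows "\<bar>bS T h k x\<bar> \<le> k * K"
proof -
  have "\<bar>bS T h k x\<bar> \<le> (\<Sum>i<k. \<bar>h ((T^^i) x)\<bar>)" unfolding bS_def by (rule sum_abs)
  also have "\<dots> \<le> (\<Sum>i<k. K)" by (intro sum_mono assms)
  finally show ?thesis by simp
qed

lemma bM_bound:
  assumes "\<And>y. \<bar>h y\<bar> \<le> K" shows "\<bar>bM T h n x\<bar> \<le> n * \<bar>K\<bar>"
proof -
  from bM_att[of n T h x] obtain k where kk: "k \<le> n \<and> bM T h n x = bS T h k x" ..
  then have "k \<le> n" "bM T h n x = bS T h k x" by simp_all
  moreover have "\<bar>bS T h k x\<bar> \<le> k * K" by (rule bS_bound[where h=h and K=K, OF assms])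
  moreover have "real k * K \<le> n * \<bar>K\<bar>"
  proof -
    have "real k * K \<le> real k * \<bar>K\<bar>" by (intro mult_left_mono) auto
    also have "\<dots> \<le> n * \<bar>K\<bar>" using \<open>k \<le> n\<close> by (intro mult_right_mono) auto
    finally show ?thesis .
  qed
  ultimately show ?thesis by simp
qed

lemma maximal_ergodic:
  assumes P: "prob_space N" and T: "T \<in> measurable N N" and inv: "distr N N T = N"
    and h: "h \<in> borel_measurable N" and hb: "\<And>y. \<bar>h y\<bar> \<le> K"
  shows "0 \<le> (\<integral>x. indicator {x. \<exists>k. bS T h k x > 0} x * h x \<partial>N)"
proof -
  interpret prob_space N by fact
  have Mm: "bM T h n \<in> borel_measurable N" for n using bM_meas[OF T h] .
  have intM: "integrable N (bM T h n)" for n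
    by (rule integrable_const_bound[where B="n * \<bar>K\<bar>"]) (auto intro: Mm bM_bound[OF hb])
  have intMT: "integrable N (\<lambda>x. bM T h n (T x))" for n
    using intM[of n] integrable_distr_eq[OF T Mm] inv by simp
  have eqT: "(\<integral>x. bM T h n (T x) \<partial>N) = (\<integral>x. bM T h n x \<partial>N)" for n
    using integral_distr[OF T Mm, of n] inv by simp
  have setm: "{x. bM T h n x > 0} \<inter> space N \<in> sets N" for n
    using Mm[of n] by measurable
  have indm: "(\<lambda>x. indicator {x. bM T h n x > 0} x * h x) \<in> borel_measurable N" for n
  proof -
    have "(\<lambda>x. indicator {x. bM T h n x > 0} x * h x) = (\<lambda>x. (if bM T h n x > 0 then h x else 0))"
      by (auto simp: indicator_def)
    then show ?thesis using Mm[of n] h by simp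
  qed
  have indb: "\<bar>indicator S x * h x\<bar> \<le> \<bar>K\<bar>" for S x
    using hb[of x] by (cases "x \<in> S") auto
  have intI: "integrable N (\<lambda>x. indicator {x. bM T h n x > 0} x * h x)" for n
    by (rule integrable_const_bound[where B="\<bar>K\<bar>"]) (auto intro: indm indb)
  have step: "0 \<le> (\<integral>x. indicator {x. bM T h n x > 0} x * h x \<partial>N)" for n
  proof -
    have "0 = (\<integral>x. bM T h n x \<partial>N) - (\<integral>x. bM T h n (T x) \<partial>N)" using eqT by simp
    also have "\<dots> = (\<integral>x. bM T h n x - bM T h n (T x) \<partial>N)" using intM intMT by simp
    also have "\<dots> \<le> (\<integral>x. indicator {x. bM T h n x > 0} x * h x \<partial>N)"
      by (intro integral_mono intI Bochner_Integration.integrable_diff intM intMT bM_key)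
    finally show ?thesis .
  qed
  have lim: "(\<lambda>n. \<integral>x. indicator {x. bM T h n x > 0} x * h x \<partial>N) \<longlonglongrightarrow>
      (\<integral>x. indicator {x. \<exists>k. bS T h k x > 0} x * h x \<partial>N)"
  proof (rule integral_dominated_convergence[where w="\<lambda>_. \<bar>K\<bar>"])
    have e: "(\<lambda>x. indicator {x. \<exists>k. bS T h k x > 0} x * h x) = (\<lambda>x. if \<exists>k. bS T h k x > 0 then h x else 0)"
      by (auto simp: indicator_def)
    have [measurable]: "bS T h k \<in> borel_measurable N" for k by (rule bS_meas[OF T h])
    show "(\<lambda>x. indicator {x. \<exists>k. bS T h k x > 0} x * h x) \<in> borel_measurable N"
      unfolding e using h by measurable
    show "(\<lambda>x. indicator {x. bM T h n x > 0} x * h x) \<in> borel_measurable N" for n by (rule indm)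
    show "integrable N (\<lambda>_. \<bar>K\<bar>)" by simp
    show "AE x in N. norm (indicator {x. bM T h n x > 0} x * h x) \<le> \<bar>K\<bar>" for n
      using indb by auto
    show "AE x in N. (\<lambda>n. indicator {x. bM T h n x > 0} x * h x) \<longlonglongrightarrow> indicator {x. \<exists>k. bS T h k x > 0} x * h x"
    proof (intro AE_I2)
      fix x
      show "(\<lambda>n. indicator {x. bM T h n x > 0} x * h x) \<longlonglongrightarrow> indicator {x. \<exists>k. bS T h k x > 0} x * h x"
      proof (cases "\<exists>k. bS T h k x > 0")
        case True
        then obtain k where "bS T h k x > 0" by auto
        then have "eventually (\<lambda>n. indicator {x. bM T h n x > 0} x * h x = indicator {x. \<exists>k. bS T h k x > 0} x * h x) sequentially"
          by (intro eventually_sequentiallyI[of k]) (auto simp: bM_pos_iff indicator_def)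
        then show ?thesis by (rule tendsto_eventually)
      next
        case False
        then show ?thesis by (simp add: bM_pos_iff)
      qed
    qed
  qed
  show ?thesis using step by (intro LIMSEQ_le_const[OF lim]) auto
qed

definition bA :: "('a \<Rightarrow> 'a) \<Rightarrow> ('a \<Rightarrow> real) \<Rightarrow> nat \<Rightarrow> 'a \<Rightarrow> real" where
  "bA T f n x = bS T f n x / real n"

definition bU :: "('a \<Rightarrow> 'a) \<Rightarrow> ('a \<Rightarrow> real) \<Rightarrow> 'a \<Rightarrow> ereal" where
  "bU T f x = limsup (\<lambda>n. ereal (bA T f n x))"

definition bL :: "('a \<Rightarrow> 'a) \<Rightarrow> ('a \<Rightarrow> real) \<Rightarrow> 'a \<Rightarrow> ereal" where
  "bL T f x = liminf (\<lambda>n. ereal (bA T f n x))"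

lemma bA_bound:
  assumes "\<And>y. \<bar>f y\<bar> \<le> K" shows "\<bar>bA T f n x\<bar> \<le> \<bar>K\<bar>"
proof (cases "n = 0")
  case True then show ?thesis by (simp add: bA_def)
next
  case False
  have "\<bar>bS T f n x\<bar> \<le> n * K" by (rule bS_bound[OF assms])
  also have "\<dots> \<le> n * \<bar>K\<bar>" by (intro mult_left_mono) auto
  finally show ?thesis using False by (simp add: bA_def divide_le_eq mult.commute)
qed

lemma bA_meas:
  assumes "T \<in> measurable N N" "f \<in> borel_measurable N"
  shows "bA T f n \<in> borel_measurable N"
  unfolding bA_def using bS_meas[OF assms] by measurable

lemma div_aux1: assumes "(x::real) > 0" shows "s / x - s / (x + 1) = s / (x * (x + 1))"
proof -
  have "x + 1 > 0" using assms by simp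
  then show ?thesis using assms by (simp add: divide_simps) (simp add: algebra_simps)
qed

lemma div_aux2: assumes "(x::real) > 0" shows "(s - (c::real)) / x - s / (x + 1) = s / (x * (x + 1)) - c / x"
  using div_aux1[OF assms, of s] by (simp add: diff_divide_distrib)

lemma shift_aux: assumes np: "(x::real) > 0" and s: "\<bar>s\<bar> \<le> (x + 1) * K" and fx: "\<bar>c\<bar> \<le> K"
  shows "\<bar>s / (x * (x + 1)) - c / x\<bar> \<le> 2 * \<bar>K\<bar> / x"
proof -
  have p: "x * (x + 1) > 0" using np by simp
  have "\<bar>s / (x * (x + 1))\<bar> = \<bar>s\<bar> / (x * (x + 1))" using p by (simp add: abs_divide)
  also have "\<dots> \<le> ((x + 1) * K) / (x * (x + 1))" using p s by (intro divide_right_mono) auto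
  also have "\<dots> = K / x" using np by simp
  finally have a: "\<bar>s / (x * (x + 1))\<bar> \<le> K / x" .
  have "\<bar>c / x\<bar> = \<bar>c\<bar> / x" using np by (simp add: abs_divide)
  also have "\<dots> \<le> K / x" using np fx by (intro divide_right_mono) auto
  finally have b: "\<bar>c / x\<bar> \<le> K / x" .
  have "\<bar>s / (x * (x + 1)) - c / x\<bar> \<le> \<bar>s / (x * (x + 1))\<bar> + \<bar>c / x\<bar>" by (rule abs_triangle_ineq4)
  also have "\<dots> \<le> K / x + K / x" using a b by simp
  also have "\<dots> \<le> 2 * \<bar>K\<bar> / x" using np by (simp add: divide_right_mono)
  finally show ?thesis .
qed

lemma bA_shift_diff:
  assumes fb: "\<And>y. \<bar>f y\<bar> \<le> K"
  shows "(\<lambda>n. bA T f n (T x) - bA T f (Suc n) x) \<longlonglongrightarrow> 0"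
proof (rule Lim_null_comparison)
  show "(\<lambda>n. 2 * \<bar>K\<bar> / real n) \<longlonglongrightarrow> 0" by (rule lim_const_over_n)
  show "eventually (\<lambda>n. norm (bA T f n (T x) - bA T f (Suc n) x) \<le> 2 * \<bar>K\<bar> / real n) sequentially"
  proof (rule eventually_sequentiallyI[of 1])
    fix n :: nat assume n: "1 \<le> n"
    define s where "s = bS T f (Suc n) x"
    have s: "\<bar>s\<bar> \<le> (Suc n) * K" unfolding s_def by (rule bS_bound[where h=f and K=K, OF fb])
    have e1: "bA T f n (T x) = (s - f x) / n" unfolding s_def bA_def by (simp add: bS_Suc)
    have e2: "bA T f (Suc n) x = s / (real n + 1)" unfolding s_def bA_def by (simp add: add.commute)
    have np: "real n > 0" using n by simp
    have "bA T f n (T x) - bA T f (Suc n) x = s / (n * (real n + 1)) - f x / n"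
      unfolding e1 e2 by (rule div_aux2[OF np])
    moreover have "\<bar>s\<bar> \<le> (real n + 1) * K" using s by (simp add: add.commute)
    ultimately show "norm (bA T f n (T x) - bA T f (Suc n) x) \<le> 2 * \<bar>K\<bar> / real n"
      using shift_aux[OF np _ fb[of x]] by simp
  qed
qed

lemma bU_inv:
  assumes fb: "\<And>y. \<bar>f y\<bar> \<le> K"
  shows "bU T f (T x) = bU T f x"
proof -
  let ?d = "\<lambda>n. bA T f n (T x) - bA T f (Suc n) x"
  have d0: "(\<lambda>n. ?d n) \<longlonglongrightarrow> 0" by (rule bA_shift_diff[where f=f and K=K, OF fb])
  have d: "(\<lambda>n. ereal (?d n)) \<longlonglongrightarrow> 0" using d0 by (simp add: zero_ereal_def)
  have "bU T f (T x) = limsup (\<lambda>n. ereal (?d n) + ereal (bA T f (n+1) x))"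
    unfolding bU_def by simp
  also have "\<dots> = 0 + limsup (\<lambda>n. ereal (bA T f (n+1) x))"
    by (rule ereal_limsup_lim_add[OF d]) simp
  also have "\<dots> = bU T f x" unfolding bU_def using limsup_shift[of "\<lambda>n. ereal (bA T f n x)"] by simp
  finally show ?thesis .
qed

lemma bL_inv:
  assumes fb: "\<And>y. \<bar>f y\<bar> \<le> K"
  shows "bL T f (T x) = bL T f x"
proof -
  let ?d = "\<lambda>n. bA T f n (T x) - bA T f (Suc n) x"
  have d0: "(\<lambda>n. ?d n) \<longlonglongrightarrow> 0" by (rule bA_shift_diff[where f=f and K=K, OF fb])
  have d: "(\<lambda>n. ereal (?d n)) \<longlonglongrightarrow> 0" using d0 by (simp add: zero_ereal_def)
  have "bL T f (T x) = liminf (\<lambda>n. ereal (?d n) + ereal (bA T f (n+1) x))"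
    unfolding bL_def by simp
  also have "\<dots> = 0 + liminf (\<lambda>n. ereal (bA T f (n+1) x))"
    by (rule ereal_liminf_lim_add[OF d]) simp
  also have "\<dots> = bL T f x" unfolding bL_def using liminf_shift[of "\<lambda>n. ereal (bA T f n x)"] by simp
  finally show ?thesis .
qed

lemma bU_bound:
  assumes fb: "\<And>y. \<bar>f y\<bar> \<le> K"
  shows "bU T f x \<le> ereal \<bar>K\<bar>" "- ereal \<bar>K\<bar> \<le> bU T f x"
    "bL T f x \<le> ereal \<bar>K\<bar>" "- ereal \<bar>K\<bar> \<le> bL T f x" "bL T f x \<le> bU T f x"
proof -
  have u: "ereal (bA T f n x) \<le> ereal \<bar>K\<bar>" "- ereal \<bar>K\<bar> \<le> ereal (bA T f n x)" for n
  proof -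
    have "\<bar>bA T f n x\<bar> \<le> \<bar>K\<bar>" by (rule bA_bound[where f=f and K=K, OF fb])
    then show "ereal (bA T f n x) \<le> ereal \<bar>K\<bar>" "- ereal \<bar>K\<bar> \<le> ereal (bA T f n x)" by (simp_all add: abs_le_iff)
  qed
  show "bU T f x \<le> ereal \<bar>K\<bar>" unfolding bU_def by (intro Limsup_bounded always_eventually) (use u in auto)
  show "bL T f x \<le> bU T f x" unfolding bU_def bL_def by (intro Liminf_le_Limsup) simp
  show "- ereal \<bar>K\<bar> \<le> bL T f x" unfolding bL_def by (intro Liminf_bounded always_eventually) (use u in auto)
  then show "- ereal \<bar>K\<bar> \<le> bU T f x" using \<open>bL T f x \<le> bU T f x\<close> by simp
  show "bL T f x \<le> ereal \<bar>K\<bar>" using \<open>bL T f x \<le> bU T f x\<close> \<open>bU T f x \<le> ereal \<bar>K\<bar>\<close> by simp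
qed

lemma funpow_space:
  assumes "T \<in> measurable N N" "x \<in> space N" shows "(T^^i) x \<in> space N"
  using measurable_space[OF measurable_funpow[OF assms(1)] assms(2)] .

lemma distr_funpow:
  assumes T: "T \<in> measurable N N" and inv: "distr N N T = N"
  shows "distr N N (T^^i) = N"
proof (induction i)
  case 0 then show ?case by (simp add: distr_id2[unfolded id_def] cong: distr_cong)
next
  case (Suc i)
  have "distr N N (T^^Suc i) = distr N N (T \<circ> (T^^i))" by simp
  also have "\<dots> = distr (distr N N (T^^i)) N T"
    by (rule distr_distr[symmetric, OF T measurable_funpow[OF T]])
  also have "\<dots> = distr N N T" using Suc by simp
  also have "\<dots> = N" by (rule inv)
  finally show ?case .
qed

lemma bU_meas:
  assumes "T \<in> measurable N N" "f \<in> borel_measurable N"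
  shows "bU T f \<in> borel_measurable N" "bL T f \<in> borel_measurable N"
  unfolding bU_def bL_def using bA_meas[OF assms] by measurable

lemma funpow_inv:
  assumes fb: "\<And>y. \<bar>f y\<bar> \<le> K"
  shows "bU T f ((T^^i) x) = bU T f x" "bL T f ((T^^i) x) = bL T f x"
  by (induction i) (simp_all add: bU_inv[where f=f and K=K and T=T, OF fb] bL_inv[where f=f and K=K and T=T, OF fb])

lemma bS_diff_const: "bS T (\<lambda>y. f y - c) n x = bS T f n x - n * c"
  unfolding bS_def by (simp add: sum_subtractf)

lemma bS_const_diff: "bS T (\<lambda>y. c - f y) n x = n * c - bS T f n x"
  unfolding bS_def by (simp add: sum_subtractf)

lemma bS_ind:
  assumes "\<And>i. indicator E ((T^^i) x) = (indicator E x :: real)"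
  shows "bS T (\<lambda>y. indicator E y * g y) n x = indicator E x * bS T g n x"
  unfolding bS_def using assms by (simp add: sum_distrib_left)

lemma E_null:
  assumes P: "prob_space N" and T: "T \<in> measurable N N" and inv: "distr N N T = N"
    and f: "f \<in> borel_measurable N" and fb: "\<And>y. \<bar>f y\<bar> \<le> K" and ab: "a < b"
  shows "{x\<in>space N. bL T f x < ereal a \<and> ereal b < bU T f x} \<in> null_sets N"
proof -
  interpret prob_space N by fact
  define E where "E = {x\<in>space N. bL T f x < ereal a \<and> ereal b < bU T f x}"
  have Em: "E \<in> sets N" unfolding E_def using bU_meas[OF T f] by measurable
  have Einv: "indicator E ((T^^i) x) = (indicator E x :: real)" if "x \<in> space N" for i x
  proof -
    have s: "(T^^i) x \<in> space N" by (rule funpow_space[OF T that])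
    have u: "bU T f ((T^^i) x) = bU T f x" "bL T f ((T^^i) x) = bL T f x"
      by (rule funpow_inv[where f=f and K=K, OF fb])+
    show ?thesis using that s u by (simp add: E_def indicator_def)
  qed
  have intE: "integrable N (\<lambda>x. indicator E x * g x)" if "g \<in> borel_measurable N" "\<And>x. \<bar>g x\<bar> \<le> C" for g :: "'a \<Rightarrow> real" and C :: real
  proof (rule integrable_const_bound[where B="\<bar>C\<bar>"])
    show "AE x in N. norm (indicator E x * g x) \<le> \<bar>C\<bar>"
      using that(2) by (intro AE_I2) (auto simp: indicator_def intro: order_trans[OF _ abs_ge_self])
    show "(\<lambda>x. indicator E x * g x) \<in> borel_measurable N" using that(1) Em by measurable
  qed
  have bnd1: "\<bar>f x - b\<bar> \<le> \<bar>K\<bar> + \<bar>b\<bar>" for x using fb[of x] by linarith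
  have bnd2: "\<bar>a - f x\<bar> \<le> \<bar>K\<bar> + \<bar>a\<bar>" for x using fb[of x] by linarith
  have bnd1': "\<bar>indicator E x * (f x - b)\<bar> \<le> \<bar>K\<bar> + \<bar>b\<bar>" for x
    using bnd1[of x] by (auto simp: indicator_def)
  have bnd2': "\<bar>indicator E x * (a - f x)\<bar> \<le> \<bar>K\<bar> + \<bar>a\<bar>" for x
    using bnd2[of x] by (auto simp: indicator_def)
  have I1: "0 \<le> (\<integral>x. indicator E x * (f x - b) \<partial>N)"
  proof -
    let ?h = "\<lambda>x. indicator E x * (f x - b)"
    have "0 \<le> (\<integral>x. indicator {x. \<exists>k. bS T ?h k x > 0} x * ?h x \<partial>N)"
      by (rule maximal_ergodic[OF P T inv _ bnd1']) (use f Em in measurable)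
    also have "\<dots> = (\<integral>x. ?h x \<partial>N)"
    proof (rule Bochner_Integration.integral_cong[OF refl])
      fix x assume x: "x \<in> space N"
      have "(\<exists>k. bS T ?h k x > 0) \<longleftrightarrow> x \<in> E"
      proof
        assume "\<exists>k. bS T ?h k x > 0"
        then show "x \<in> E" using bS_ind[where g="\<lambda>y. f y - b", OF Einv[OF x]]
          by (cases "x \<in> E") auto
      next
        assume xE: "x \<in> E"
        then have "ereal b < bU T f x" by (simp add: E_def)
        then obtain n where n: "n \<ge> 1" "b < bA T f n x"
        proof -
          assume r: "\<And>n. 1 \<le> n \<Longrightarrow> b < bA T f n x \<Longrightarrow> thesis"
          show thesis
          proof (rule ccontr)
            assume "\<not> thesis"
            then have "\<forall>n\<ge>1. ereal (bA T f n x) \<le> ereal b" using r by force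
            then have "bU T f x \<le> ereal b" unfolding bU_def
              by (intro Limsup_bounded eventually_sequentiallyI[of 1]) auto
            with \<open>ereal b < bU T f x\<close> show False by simp
          qed
        qed
        then have "n * b < bS T f n x" by (simp add: bA_def field_simps)
        then have "bS T (\<lambda>y. f y - b) n x > 0" by (simp add: bS_diff_const)
        then show "\<exists>k. bS T ?h k x > 0"
          using xE bS_ind[where g="\<lambda>y. f y - b", OF Einv[OF x]] by (intro exI[of _ n]) simp
      qed
      then show "indicator {x. \<exists>k. bS T ?h k x > 0} x * ?h x = ?h x"
        by (auto simp: indicator_def)
    qed
    finally show ?thesis .
  qed
  have I2: "0 \<le> (\<integral>x. indicator E x * (a - f x) \<partial>N)"
  proof -
    let ?h = "\<lambda>x. indicator E x * (a - f x)"
    have "0 \<le> (\<integral>x. indicator {x. \<exists>k. bS T ?h k x > 0} x * ?h x \<partial>N)"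
      by (rule maximal_ergodic[OF P T inv _ bnd2']) (use f Em in measurable)
    also have "\<dots> = (\<integral>x. ?h x \<partial>N)"
    proof (rule Bochner_Integration.integral_cong[OF refl])
      fix x assume x: "x \<in> space N"
      have "(\<exists>k. bS T ?h k x > 0) \<longleftrightarrow> x \<in> E"
      proof
        assume "\<exists>k. bS T ?h k x > 0"
        then show "x \<in> E" using bS_ind[where g="\<lambda>y. a - f y", OF Einv[OF x]]
          by (cases "x \<in> E") auto
      next
        assume xE: "x \<in> E"
        then have "bL T f x < ereal a" by (simp add: E_def)
        then obtain n where n: "n \<ge> 1" "bA T f n x < a"
        proof -
          assume r: "\<And>n. 1 \<le> n \<Longrightarrow> bA T f n x < a \<Longrightarrow> thesis"
          show thesis
          proof (rule ccontr)
            assume "\<not> thesis"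
            then have "\<forall>n\<ge>1. ereal a \<le> ereal (bA T f n x)" using r by force
            then have "ereal a \<le> bL T f x" unfolding bL_def
              by (intro Liminf_bounded eventually_sequentiallyI[of 1]) auto
            with \<open>bL T f x < ereal a\<close> show False by simp
          qed
        qed
        then have "bS T f n x < n * a" by (simp add: bA_def field_simps)
        then have "bS T (\<lambda>y. a - f y) n x > 0" by (simp add: bS_const_diff)
        then show "\<exists>k. bS T ?h k x > 0"
          using xE bS_ind[where g="\<lambda>y. a - f y", OF Einv[OF x]] by (intro exI[of _ n]) simp
      qed
      then show "indicator {x. \<exists>k. bS T ?h k x > 0} x * ?h x = ?h x"
        by (auto simp: indicator_def)
    qed
    finally show ?thesis .
  qed
  have i1: "integrable N (\<lambda>x. indicator E x * (f x - b))" by (rule intE[OF _ bnd1]) (use f in measurable)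
  have i2: "integrable N (\<lambda>x. indicator E x * (a - f x))" by (rule intE[OF _ bnd2]) (use f in measurable)
  have "0 \<le> (\<integral>x. indicator E x * (f x - b) \<partial>N) + (\<integral>x. indicator E x * (a - f x) \<partial>N)"
    using I1 I2 by simp
  also have "\<dots> = (\<integral>x. indicator E x * (f x - b) + indicator E x * (a - f x) \<partial>N)"
    using i1 i2 by simp
  also have "\<dots> = (\<integral>x. indicator E x * (a - b) \<partial>N)"
    by (intro Bochner_Integration.integral_cong) (auto simp: algebra_simps)
  also have "\<dots> = (a - b) * measure N E"
    using Em by simp
  finally have "measure N E \<le> 0" using ab by (simp add: zero_le_mult_iff)
  then have "measure N E = 0" by (simp add: measure_nonneg antisym)
  then show ?thesis using Em unfolding E_def[symmetric] by (simp add: null_sets_def emeasure_eq_measure)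
qed

lemma birkhoff_AE:
  assumes P: "prob_space N" and T: "T \<in> measurable N N" and inv: "distr N N T = N"
    and f: "f \<in> borel_measurable N" and fb: "\<And>y. \<bar>f y\<bar> \<le> K"
  shows "AE x in N. (\<lambda>n. bA T f n x) \<longlonglongrightarrow> real_of_ereal (bU T f x)"
proof -
  interpret prob_space N by fact
  have "AE x in N. \<forall>q::rat\<times>rat. fst q < snd q \<longrightarrow>
      \<not> (bL T f x < ereal (of_rat (fst q)) \<and> ereal (of_rat (snd q)) < bU T f x)"
  proof (subst AE_all_countable, intro allI)
    fix q :: "rat \<times> rat"
    show "AE x in N. fst q < snd q \<longrightarrow>
      \<not> (bL T f x < ereal (of_rat (fst q)) \<and> ereal (of_rat (snd q)) < bU T f x)"
    proof (cases "fst q < snd q")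
      case True
      then have "of_rat (fst q) < (of_rat (snd q) :: real)" by (simp add: of_rat_less)
      from E_null[OF P T inv f fb this] show ?thesis
        by (rule AE_I') auto
    qed simp
  qed
  then show ?thesis
  proof (rule AE_mp, intro AE_I2 impI)
    fix x assume H: "\<forall>q::rat\<times>rat. fst q < snd q \<longrightarrow>
      \<not> (bL T f x < ereal (of_rat (fst q)) \<and> ereal (of_rat (snd q)) < bU T f x)"
    note bb = bU_bound[where f=f and K=K and T=T and x=x, OF fb]
    obtain l where l: "bL T f x = ereal l" using bb(3,4) by (cases "bL T f x") auto
    obtain u where u: "bU T f x = ereal u" using bb(1,2) by (cases "bU T f x") auto
    have "l = u"
    proof (rule ccontr)
      assume "l \<noteq> u"
      then have "l < u" using bb(5) l u by simp
      then obtain r1 where r1: "r1 \<in> \<rat>" "l < r1" "r1 < u" using Rats_dense_in_real by blast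
      then obtain r2 where r2: "r2 \<in> \<rat>" "r1 < r2" "r2 < u" using Rats_dense_in_real by blast
      obtain q1 where q1: "r1 = of_rat q1" using r1(1) Rats_cases by blast
      obtain q2 where q2: "r2 = of_rat q2" using r2(1) Rats_cases by blast
      have "q1 < q2" using r2(2) q1 q2 by (simp add: of_rat_less)
      then show False using H[rule_format, of "(q1, q2)"] r1 r2 q1 q2 l u by simp
    qed
    then have "(\<lambda>n. ereal (bA T f n x)) \<longlonglongrightarrow> ereal u"
      using l u unfolding bL_def bU_def by (intro Liminf_eq_Limsup) auto
    then show "(\<lambda>n. bA T f n x) \<longlonglongrightarrow> real_of_ereal (bU T f x)" using u by simp
  qed
qed

lemma birkhoff_int:
  assumes P: "prob_space N" and T: "T \<in> measurable N N" and inv: "distr N N T = N"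
    and f: "f \<in> borel_measurable N" and fb: "\<And>y. \<bar>f y\<bar> \<le> K"
    and I: "I \<in> sets N" and Iinv: "T -` I \<inter> space N = I"
  shows "(\<integral>x. indicator I x * real_of_ereal (bU T f x) \<partial>N) = (\<integral>x. indicator I x * f x \<partial>N)"
proof -
  interpret prob_space N by fact
  have Iinvi: "indicator I ((T^^i) x) = (indicator I x :: real)" if x: "x \<in> space N" for i x
  proof (induction i)
    case (Suc i)
    have "(T^^i) x \<in> space N" by (rule funpow_space[OF T x])
    then have "(T ((T^^i) x) \<in> I) = ((T^^i) x \<in> I)" using Iinv by blast
    then show ?case using Suc by (simp add: indicator_def split: if_splits)
  qed simp
  have fm: "(\<lambda>x. indicator I x * f x) \<in> borel_measurable N" using f I by measurable
  have fi: "integrable N (\<lambda>x. indicator I x * f x)"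
    by (rule integrable_const_bound[where B="\<bar>K\<bar>"]) 
       (use fm fb in \<open>auto simp: indicator_def intro!: AE_I2 intro: order_trans[OF _ abs_ge_self]\<close>)
  have each: "(\<integral>x. indicator I x * f ((T^^i) x) \<partial>N) = (\<integral>x. indicator I x * f x \<partial>N)" for i
  proof -
    have "(\<integral>x. indicator I x * f ((T^^i) x) \<partial>N) = (\<integral>x. indicator I ((T^^i) x) * f ((T^^i) x) \<partial>N)"
      by (intro Bochner_Integration.integral_cong) (auto simp: Iinvi)
    also have "\<dots> = (\<integral>x. indicator I x * f x \<partial>distr N N (T^^i))"
      by (rule integral_distr[symmetric, OF measurable_funpow[OF T] fm])
    finally show ?thesis using distr_funpow[OF T inv] by simp
  qed
  have eqn: "(\<integral>x. indicator I x * bA T f n x \<partial>N) = (\<integral>x. indicator I x * f x \<partial>N)" if n: "n \<ge> 1" for n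
  proof -
    have fim: "integrable N (\<lambda>x. indicator I x * f ((T^^i) x))" for i
    proof -
      have "integrable N (\<lambda>x. indicator I ((T^^i) x) * f ((T^^i) x))"
        using fi integrable_distr_eq[OF measurable_funpow[OF T] fm] distr_funpow[OF T inv] by simp
      moreover have "integrable N (\<lambda>x. indicator I ((T^^i) x) * f ((T^^i) x)) = integrable N (\<lambda>x. indicator I x * f ((T^^i) x))"
        by (intro Bochner_Integration.integrable_cong) (auto simp: Iinvi)
      ultimately show ?thesis by simp
    qed
    have "(\<integral>x. indicator I x * bA T f n x \<partial>N) = (\<integral>x. (\<Sum>i<n. indicator I x * f ((T^^i) x)) / n \<partial>N)"
      by (intro Bochner_Integration.integral_cong) (auto simp: bA_def bS_def sum_distrib_left)
    also have "\<dots> = (\<integral>x. (\<Sum>i<n. indicator I x * f ((T^^i) x)) \<partial>N) / n"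
      by (rule integral_divide_zero)
    also have "\<dots> = (\<Sum>i<n. (\<integral>x. indicator I x * f ((T^^i) x) \<partial>N)) / n"
      using Bochner_Integration.integral_sum[of "{..<n}" N "\<lambda>i x. indicator I x * f ((T^^i) x)"] fim by simp
    also have "\<dots> = (\<integral>x. indicator I x * f x \<partial>N)" using each n by simp
    finally show ?thesis .
  qed
  have lim: "(\<lambda>n. \<integral>x. indicator I x * bA T f n x \<partial>N) \<longlonglongrightarrow> (\<integral>x. indicator I x * real_of_ereal (bU T f x) \<partial>N)"
  proof (rule integral_dominated_convergence[where w="\<lambda>_. \<bar>K\<bar>"])
    show "(\<lambda>x. indicator I x * real_of_ereal (bU T f x)) \<in> borel_measurable N"
      using bU_meas[OF T f] I by measurable
    show "(\<lambda>x. indicator I x * bA T f n x) \<in> borel_measurable N" for n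
      using bA_meas[OF T f] I by measurable
    show "integrable N (\<lambda>_. \<bar>K\<bar>)" by simp
    show "AE x in N. norm (indicator I x * bA T f n x) \<le> \<bar>K\<bar>" for n
      using bA_bound[where f=f and K=K, OF fb] by (intro AE_I2) (auto simp: indicator_def)
    show "AE x in N. (\<lambda>n. indicator I x * bA T f n x) \<longlonglongrightarrow> indicator I x * real_of_ereal (bU T f x)"
      using birkhoff_AE[OF P T inv f fb] by eventually_elim (auto intro: tendsto_mult_left)
  qed
  have "(\<lambda>n. \<integral>x. indicator I x * bA T f n x \<partial>N) \<longlonglongrightarrow> (\<integral>x. indicator I x * f x \<partial>N)"
    by (rule tendsto_eventually, rule eventually_sequentiallyI[of 1]) (rule eqn)
  from LIMSEQ_unique[OF lim this] show ?thesis .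
qed

abbreviation PS :: "(int \<Rightarrow> 'f::topological_space) measure" where
  "PS \<equiv> Pi\<^sub>M UNIV (\<lambda>_::int. borel)"

definition shB :: "(int \<Rightarrow> 'f) \<Rightarrow> (int \<Rightarrow> 'f)" where
  "shB p = (\<lambda>t. p (t - 1))"

lemma space_PS[simp]: "space (PS :: (int \<Rightarrow> 'f::topological_space) measure) = UNIV"
  by (auto simp: space_PiM PiE_def extensional_def)

lemma path_meas:
  assumes X: "\<And>t. X t \<in> measurable M borel"
  shows "(\<lambda>\<omega> t. X (t + s) \<omega>) \<in> measurable M (PS :: (int \<Rightarrow> 'f::topological_space) measure)"
  by (rule measurable_PiM_single') (auto intro: X)

lemma path_meas0:
  assumes X: "\<And>t. X t \<in> measurable M borel"
  shows "(\<lambda>\<omega> t. X t \<omega>) \<in> measurable M (PS :: (int \<Rightarrow> 'f::topological_space) measure)"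
  by (rule measurable_PiM_single') (auto intro: X)

lemma shiftZ_meas: "shiftZ \<in> measurable PS (PS :: (int \<Rightarrow> 'f::topological_space) measure)"
  unfolding shiftZ_def by (rule measurable_PiM_single') (auto intro: measurable_component_singleton)

lemma shB_meas: "shB \<in> measurable PS (PS :: (int \<Rightarrow> 'f::topological_space) measure)"
  unfolding shB_def by (rule measurable_PiM_single') (auto intro: measurable_component_singleton)

lemma stat_shift:
  assumes M: "prob_space M" and X: "\<And>t. X t \<in> measurable M borel" and st: "stationary M X"
  shows "distr M PS (\<lambda>\<omega> t. X (t + s) \<omega>) = distr M (PS :: (int \<Rightarrow> 'f::topological_space) measure) (\<lambda>\<omega> t. X t \<omega>)"
proof (rule measure_eqI_PiM_infinite)
  interpret prob_space M by fact
  show "sets (distr M PS (\<lambda>\<omega> t. X (t + s) \<omega>)) = sets (PS :: (int \<Rightarrow> 'f) measure)" by simp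
  show "sets (distr M PS (\<lambda>\<omega> t. X t \<omega>)) = sets (PS :: (int \<Rightarrow> 'f) measure)" by simp
  show "finite_measure (distr M PS (\<lambda>\<omega> t. X (t + s) \<omega>) :: (int \<Rightarrow> 'f) measure)"
    using prob_space_distr[OF path_meas[where X=X and M=M and s=s, OF X]] by (simp add: prob_space_def)
  fix J :: "int set" and A assume J: "finite J" "J \<subseteq> UNIV" and A: "\<And>i. i \<in> J \<Longrightarrow> A i \<in> sets (borel :: 'f measure)"
  have eq: "emeasure (distr M PS (\<lambda>\<omega> t. X (t + r) \<omega>)) (prod_emb UNIV (\<lambda>_. borel) J (Pi\<^sub>E J A))
      = emeasure (distr M (Pi\<^sub>M J (\<lambda>_. borel)) (\<lambda>\<omega>. \<lambda>j\<in>J. X (j + r) \<omega>)) (Pi\<^sub>E J A)" for r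
  proof -
    have m1: "(\<lambda>\<omega>. \<lambda>j\<in>J. X (j + r) \<omega>) \<in> measurable M (Pi\<^sub>M J (\<lambda>_. borel :: 'f measure))"
      by (rule measurable_restrict) (auto intro: X)
    have s1: "prod_emb UNIV (\<lambda>_. borel :: 'f measure) J (Pi\<^sub>E J A) \<in> sets (PS :: (int \<Rightarrow> 'f) measure)"
      using J A by (intro sets_PiM_I) auto
    have s2: "Pi\<^sub>E J A \<in> sets (Pi\<^sub>M J (\<lambda>_. borel :: 'f measure))"
      using J A by (intro sets_PiM_I_finite) auto
    have "(\<lambda>\<omega> t. X (t + r) \<omega>) -` prod_emb UNIV (\<lambda>_. borel :: 'f measure) J (Pi\<^sub>E J A) \<inter> space M
        = (\<lambda>\<omega>. \<lambda>j\<in>J. X (j + r) \<omega>) -` Pi\<^sub>E J A \<inter> space M"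
      by (auto simp: prod_emb_def PiE_def extensional_def Pi_def)
    then show ?thesis
      using emeasure_distr[OF path_meas[where X=X and M=M and s=r, OF X] s1] emeasure_distr[OF m1 s2] by simp
  qed
  show "emeasure (distr M PS (\<lambda>\<omega> t. X (t + s) \<omega>)) (prod_emb UNIV (\<lambda>_. borel) J (Pi\<^sub>E J A)) =
        emeasure (distr M PS (\<lambda>\<omega> t. X t \<omega>)) (prod_emb UNIV (\<lambda>_. borel) J (Pi\<^sub>E J A))"
    using eq[of s] eq[of 0] st J unfolding stationary_def by simp
qed

lemma shiftZ_pow: "(shiftZ^^i) p = (\<lambda>t. p (t + int i))"
  by (induction i arbitrary: p) (auto simp: shiftZ_def funpow_Suc_right algebra_simps simp del: funpow.simps)

lemma shB_pow: "(shB^^i) p = (\<lambda>t. p (t - int i))"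
  by (induction i arbitrary: p) (auto simp: shB_def funpow_Suc_right algebra_simps simp del: funpow.simps)

lemma shB_shiftZ[simp]: "shB (shiftZ p) = p" "shiftZ (shB p) = p"
  by (auto simp: shB_def shiftZ_def)

lemma law_inv:
  assumes M: "prob_space M" and X: "\<And>t. X t \<in> measurable M borel" and st: "stationary M X"
  shows "distr (distr M PS (\<lambda>\<omega> t. X t \<omega>)) PS shiftZ = distr M (PS :: (int \<Rightarrow> 'f::topological_space) measure) (\<lambda>\<omega> t. X t \<omega>)"
    "distr (distr M PS (\<lambda>\<omega> t. X t \<omega>)) PS shB = distr M (PS :: (int \<Rightarrow> 'f::topological_space) measure) (\<lambda>\<omega> t. X t \<omega>)"
proof -
  have "distr (distr M PS (\<lambda>\<omega> t. X t \<omega>)) PS shiftZ = distr M (PS :: (int \<Rightarrow> 'f) measure) (shiftZ \<circ> (\<lambda>\<omega> t. X t \<omega>))"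
    by (rule distr_distr[OF shiftZ_meas path_meas0[where X=X and M=M, OF X]])
  also have "shiftZ \<circ> (\<lambda>\<omega> t. X t \<omega>) = (\<lambda>\<omega> t. X (t + 1) \<omega>)" by (auto simp: shiftZ_def)
  finally show "distr (distr M PS (\<lambda>\<omega> t. X t \<omega>)) PS shiftZ = distr M (PS :: (int \<Rightarrow> 'f) measure) (\<lambda>\<omega> t. X t \<omega>)"
    using stat_shift[where X=X and M=M and s=1, OF M X st] by simp
  have "distr (distr M PS (\<lambda>\<omega> t. X t \<omega>)) PS shB = distr M (PS :: (int \<Rightarrow> 'f) measure) (shB \<circ> (\<lambda>\<omega> t. X t \<omega>))"
    by (rule distr_distr[OF shB_meas path_meas0[where X=X and M=M, OF X]])
  also have "shB \<circ> (\<lambda>\<omega> t. X t \<omega>) = (\<lambda>\<omega> t. X (t + (-1)) \<omega>)" by (auto simp: shB_def)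
  finally show "distr (distr M PS (\<lambda>\<omega> t. X t \<omega>)) PS shB = distr M (PS :: (int \<Rightarrow> 'f) measure) (\<lambda>\<omega> t. X t \<omega>)"
    using stat_shift[where X=X and M=M and s="-1", OF M X st] by simp
qed

abbreviation RS :: "(nat \<Rightarrow> 'f::topological_space) measure" where
  "RS \<equiv> Pi\<^sub>M UNIV (\<lambda>_::nat. borel)"

lemma A1_pred:
  assumes [measurable]: "lam \<in> borel_measurable borel" "b \<in> borel_measurable borel"
  shows "Measurable.pred (RS :: (nat \<Rightarrow> 'f::topological_space) measure) (\<lambda>x. x \<in> A1 lam b C1)"
  unfolding A1_def by measurable

lemma eta_slice:
  assumes eta_meas: "(\<lambda>(r, x). eta r x) \<in> borel_measurable (restrict_space borel {0<..} \<Otimes>\<^sub>M (borel :: 'f::topological_space measure))"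
    and r: "(r::real) > 0"
  shows "(\<lambda>x. eta r x) \<in> borel_measurable (borel :: 'f measure)"
proof -
  have "(\<lambda>x::'f. (r, x)) \<in> measurable borel (restrict_space borel {0<..} \<Otimes>\<^sub>M borel)"
    using r by (intro measurable_Pair measurable_const) (auto simp: space_restrict_space)
  from measurable_comp[OF this eta_meas] show ?thesis by (simp add: comp_def)
qed

lemma A2_pred:
  assumes eta_meas: "(\<lambda>(r, x). eta r x) \<in> borel_measurable (restrict_space borel {0<..} \<Otimes>\<^sub>M (borel :: 'f::topological_space measure))"
    and C1: "C1 \<ge> 1"
  shows "Measurable.pred (RS :: (nat \<Rightarrow> 'f) measure) (\<lambda>x. x \<in> A2 eta C1 C2)"
proof -
  have [measurable]: "(\<lambda>x. eta (2 * real C1 * (2 * real C1 + 1)) x) \<in> borel_measurable (borel :: 'f measure)"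
    using C1 by (intro eta_slice[OF eta_meas]) auto
  show ?thesis unfolding A2_def by measurable
qed

lemma inv_gen_sub:
  "{{\<omega> \<in> space M. (\<lambda>t. X t \<omega>) \<in> I} | I. I \<in> (inv_sets :: (int \<Rightarrow> 'f::topological_space) set set)} \<subseteq> Pow (space M)"
  by auto

lemma space_inv_sigma: "space (inv_sigma M (X :: int \<Rightarrow> 'a \<Rightarrow> 'f::topological_space)) = space M"
  unfolding inv_sigma_def by (rule space_measure_of[OF inv_gen_sub])

lemma sets_inv_sigma: "sets (inv_sigma M (X :: int \<Rightarrow> 'a \<Rightarrow> 'f::topological_space)) =
    sigma_sets (space M) {{\<omega> \<in> space M. (\<lambda>t. X t \<omega>) \<in> I} | I. I \<in> inv_sets}"
  unfolding inv_sigma_def by (rule sets_measure_of[OF inv_gen_sub])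

lemma inv_sets_empty: "{} \<in> inv_sets" by (simp add: inv_sets_def)

lemma inv_sets_compl: "I \<in> inv_sets \<Longrightarrow> UNIV - I \<in> (inv_sets :: (int \<Rightarrow> 'f::topological_space) set set)"
proof -
  assume I: "I \<in> inv_sets"
  then have "space PS - I \<in> sets (PS :: (int \<Rightarrow> 'f) measure)" unfolding inv_sets_def by (intro sets.compl_sets) auto
  moreover have "shiftZ -` (UNIV - I) = UNIV - I" using I unfolding inv_sets_def by auto
  ultimately show ?thesis unfolding inv_sets_def by simp
qed

lemma inv_sets_UN: "(\<And>i::nat. I i \<in> inv_sets) \<Longrightarrow> (\<Union>i. I i) \<in> (inv_sets :: (int \<Rightarrow> 'f::topological_space) set set)"
proof -
  assume I: "\<And>i. I i \<in> inv_sets"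
  then have "(\<Union>i. I i) \<in> sets (PS :: (int \<Rightarrow> 'f) measure)" unfolding inv_sets_def by (intro sets.countable_UN') auto
  moreover have "shiftZ -` (\<Union>i. I i) = (\<Union>i. I i)" using I unfolding inv_sets_def by auto
  ultimately show ?thesis unfolding inv_sets_def by simp
qed

lemma inv_sigma_rep:
  assumes "A \<in> sets (inv_sigma M (X :: int \<Rightarrow> 'a \<Rightarrow> 'f::topological_space))"
  shows "\<exists>I\<in>inv_sets. A = {\<omega> \<in> space M. (\<lambda>t. X t \<omega>) \<in> I}"
  using assms unfolding sets_inv_sigma
proof (induction rule: sigma_sets.induct)
  case (Basic a) then show ?case by auto
next
  case Empty then show ?case using inv_sets_empty by (intro bexI[of _ "{}"]) auto
next
  case (Compl a)
  then obtain I where I: "I \<in> inv_sets" "a = {\<omega> \<in> space M. (\<lambda>t. X t \<omega>) \<in> I}" by blast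
  show ?case using I inv_sets_compl[OF I(1)] by (intro bexI[of _ "UNIV - I"]) auto
next
  case (Union a)
  then have "\<forall>i. \<exists>I. I \<in> inv_sets \<and> a i = {\<omega> \<in> space M. (\<lambda>t. X t \<omega>) \<in> I}" by blast
  then obtain I where I: "\<And>i. I i \<in> inv_sets" "\<And>i. a i = {\<omega> \<in> space M. (\<lambda>t. X t \<omega>) \<in> I i}"
    by metis
  show ?case using I inv_sets_UN[of I, OF I(1)] by (intro bexI[of _ "\<Union>i. I i"]) auto
qed

lemma inv_sigma_subalg:
  assumes X: "\<And>t. X t \<in> measurable M borel"
  shows "subalgebra M (inv_sigma M (X :: int \<Rightarrow> 'a \<Rightarrow> 'f::topological_space))"
  unfolding subalgebra_def
proof
  show "space (inv_sigma M X) = space M" by (rule space_inv_sigma)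
  have "{{\<omega> \<in> space M. (\<lambda>t. X t \<omega>) \<in> I} | I. I \<in> (inv_sets :: (int \<Rightarrow> 'f) set set)} \<subseteq> sets M"
  proof safe
    fix I :: "(int \<Rightarrow> 'f) set" assume "I \<in> inv_sets"
    then have "I \<in> sets PS" by (simp add: inv_sets_def)
    from measurable_sets[OF path_meas0[where X=X and M=M, OF X] this]
    show "{\<omega> \<in> space M. (\<lambda>t. X t \<omega>) \<in> I} \<in> sets M" by (simp add: vimage_def Int_def conj_commute)
  qed
  then show "sets (inv_sigma M X) \<subseteq> sets M" unfolding sets_inv_sigma by (rule sets.sigma_sets_subset)
qed

lemma inv_fun_meas:
  assumes X: "\<And>t. X t \<in> measurable M borel"
    and G: "(G :: (int \<Rightarrow> 'f::topological_space) \<Rightarrow> real) \<in> borel_measurable PS"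
    and Ginv: "\<And>p. G (shiftZ p) = G p"
  shows "(\<lambda>\<omega>. G (\<lambda>t. X t \<omega>)) \<in> borel_measurable (inv_sigma M X)"
proof (rule borel_measurableI)
  fix S :: "real set" assume "open S"
  then have "S \<in> sets borel" by simp
  from measurable_sets[OF G this] have "G -` S \<in> sets (PS :: (int \<Rightarrow> 'f) measure)" by simp
  moreover have "shiftZ -` (G -` S) = G -` S" using Ginv by auto
  ultimately have "G -` S \<in> inv_sets" by (simp add: inv_sets_def)
  then have "{\<omega> \<in> space M. (\<lambda>t. X t \<omega>) \<in> G -` S} \<in> sets (inv_sigma M X)"
    unfolding sets_inv_sigma by (intro sigma_sets.Basic) blast
  then show "(\<lambda>\<omega>. G (\<lambda>t. X t \<omega>)) -` S \<inter> space (inv_sigma M X) \<in> sets (inv_sigma M X)"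
    unfolding space_inv_sigma by (simp add: vimage_def Int_def conj_commute)
qed

lemma bounded_integrable:
  assumes "finite_measure M" "(f :: 'a \<Rightarrow> real) \<in> borel_measurable M" "\<And>x. \<bar>f x\<bar> \<le> B"
  shows "integrable M f"
  by (rule finite_measure.integrable_const_bound[OF assms(1), where B=B]) (use assms in auto)

lemma cond_exp_ident:
  assumes M: "prob_space M" and X: "\<And>t. X t \<in> measurable M borel"
    and F: "(F :: (int \<Rightarrow> 'f::topological_space) \<Rightarrow> real) \<in> borel_measurable PS" and Fb: "\<And>p. \<bar>F p\<bar> \<le> B"
    and G: "(G :: (int \<Rightarrow> 'f) \<Rightarrow> real) \<in> borel_measurable PS" and Gb: "\<And>p. \<bar>G p\<bar> \<le> B"
    and Ginv: "\<And>p. G (shiftZ p) = G p"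
    and eq: "\<And>I. I \<in> inv_sets \<Longrightarrow> (\<integral>p. indicator I p * G p \<partial>distr M PS (\<lambda>\<omega> t. X t \<omega>))
                                   = (\<integral>p. indicator I p * F p \<partial>distr M PS (\<lambda>\<omega> t. X t \<omega>))"
  shows "AE \<omega> in M. real_cond_exp M (inv_sigma M X) (\<lambda>\<omega>. F (\<lambda>t. X t \<omega>)) \<omega> = G (\<lambda>t. X t \<omega>)"
proof -
  interpret prob_space M by fact
  have Xp: "(\<lambda>\<omega> t. X t \<omega>) \<in> measurable M (PS :: (int \<Rightarrow> 'f) measure)"
    by (rule path_meas0[where X=X and M=M, OF X])
  have "finite_measure_subalgebra M (inv_sigma M X)"
    unfolding finite_measure_subalgebra_def finite_measure_subalgebra_axioms_def
    using inv_sigma_subalg[where X=X and M=M, OF X] finite_measure_axioms by simp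
  then interpret S: sigma_finite_subalgebra M "inv_sigma M X"
    by (rule finite_measure_subalgebra_is_sigma_finite)
  have Fm: "(\<lambda>\<omega>. F (\<lambda>t. X t \<omega>)) \<in> borel_measurable M"
    using measurable_comp[OF Xp F] by (simp add: comp_def)
  have Gm: "(\<lambda>\<omega>. G (\<lambda>t. X t \<omega>)) \<in> borel_measurable M"
    using measurable_comp[OF Xp G] by (simp add: comp_def)
  show ?thesis
  proof (rule S.real_cond_exp_charact)
    show "integrable M (\<lambda>\<omega>. F (\<lambda>t. X t \<omega>))"
      by (rule bounded_integrable[OF finite_measure_axioms Fm Fb])
    show "integrable M (\<lambda>\<omega>. G (\<lambda>t. X t \<omega>))"
      by (rule bounded_integrable[OF finite_measure_axioms Gm Gb])
    show "(\<lambda>\<omega>. G (\<lambda>t. X t \<omega>)) \<in> borel_measurable (inv_sigma M X)"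
      by (rule inv_fun_meas[where X=X and M=M, OF X G Ginv])
    fix A assume "A \<in> sets (inv_sigma M X)"
    then obtain I where I: "I \<in> inv_sets" "A = {\<omega> \<in> space M. (\<lambda>t. X t \<omega>) \<in> I}"
      using inv_sigma_rep by blast
    have Im: "I \<in> sets (PS :: (int \<Rightarrow> 'f) measure)" using I(1) by (simp add: inv_sets_def)
    have int_eq: "(\<integral>\<omega>\<in>A. H (\<lambda>t. X t \<omega>) \<partial>M) = (\<integral>p. indicator I p * H p \<partial>distr M PS (\<lambda>\<omega> t. X t \<omega>))"
      if H: "H \<in> borel_measurable (PS :: (int \<Rightarrow> 'f) measure)" for H :: "(int \<Rightarrow> 'f) \<Rightarrow> real"
    proof -
      have "(\<integral>\<omega>\<in>A. H (\<lambda>t. X t \<omega>) \<partial>M) = (\<integral>\<omega>. indicator I (\<lambda>t. X t \<omega>) * H (\<lambda>t. X t \<omega>) \<partial>M)"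
        unfolding set_lebesgue_integral_def using I(2)
        by (intro Bochner_Integration.integral_cong) (auto simp: indicator_def)
      also have "\<dots> = (\<integral>p. indicator I p * H p \<partial>distr M PS (\<lambda>\<omega> t. X t \<omega>))"
        by (rule integral_distr[symmetric, OF Xp]) (use H Im in measurable)
      finally show ?thesis .
    qed
    show "(\<integral>\<omega>\<in>A. F (\<lambda>t. X t \<omega>) \<partial>M) = (\<integral>\<omega>\<in>A. G (\<lambda>t. X t \<omega>) \<partial>M)"
      using int_eq[OF F] int_eq[OF G] eq[OF I(1)] by simp
  qed
qed

lemma realU_bound:
  assumes fb: "\<And>y. \<bar>f y\<bar> \<le> K"
  shows "\<bar>real_of_ereal (bU T f x)\<bar> \<le> \<bar>K\<bar>"
proof -
  have a: "bU T f x \<le> ereal \<bar>K\<bar>" "- ereal \<bar>K\<bar> \<le> bU T f x"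
    using bU_bound[where f=f and K=K and T=T and x=x, OF fb] by simp_all
  then obtain u where u: "bU T f x = ereal u" by (cases "bU T f x") auto
  show ?thesis using a u by simp
qed

lemma ergodic_conv:
  assumes M: "prob_space M" and X: "\<And>t. X t \<in> measurable M borel" and st: "stationary M X"
    and F: "(F :: (int \<Rightarrow> 'f::topological_space) \<Rightarrow> real) \<in> borel_measurable PS" and Fb: "\<And>p. \<bar>F p\<bar> \<le> K"
  shows "AE \<omega> in M. (\<lambda>n. bA shiftZ F n (\<lambda>t. X t \<omega>)) \<longlonglongrightarrow> real_cond_exp M (inv_sigma M X) (\<lambda>\<omega>. F (\<lambda>t. X t \<omega>)) \<omega>
      \<and> (\<lambda>n. bA shB (\<lambda>p. F (shB p)) n (\<lambda>t. X t \<omega>)) \<longlonglongrightarrow> real_cond_exp M (inv_sigma M X) (\<lambda>\<omega>. F (\<lambda>t. X t \<omega>)) \<omega>"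
proof -
  interpret prob_space M by fact
  define \<mu> where "\<mu> = distr M (PS :: (int \<Rightarrow> 'f) measure) (\<lambda>\<omega> t. X t \<omega>)"
  have Xp: "(\<lambda>\<omega> t. X t \<omega>) \<in> measurable M (PS :: (int \<Rightarrow> 'f) measure)"
    by (rule path_meas0[where X=X and M=M, OF X])
  have P: "prob_space \<mu>" unfolding \<mu>_def by (rule prob_space_distr[OF Xp])
  have inv1: "distr \<mu> \<mu> shiftZ = \<mu>" and inv2: "distr \<mu> \<mu> shB = \<mu>"
    using law_inv[where X=X and M=M, OF M X st] unfolding \<mu>_def by (simp_all cong: distr_cong)
  have T1: "shiftZ \<in> measurable \<mu> \<mu>" unfolding \<mu>_def using shiftZ_meas by (simp cong: measurable_cong_sets)
  have T2: "shB \<in> measurable \<mu> \<mu>" unfolding \<mu>_def using shB_meas by (simp cong: measurable_cong_sets)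
  have Fm: "F \<in> borel_measurable \<mu>" unfolding \<mu>_def using F by simp
  have FBm: "(\<lambda>p. F (shB p)) \<in> borel_measurable \<mu>"
    using measurable_comp[OF T2 Fm] by (simp add: comp_def)
  have FBb: "\<And>p. \<bar>F (shB p)\<bar> \<le> K" using Fb by simp
  have sp: "space \<mu> = UNIV" unfolding \<mu>_def by simp
  define G where "G p = real_of_ereal (bU shiftZ F p)" for p
  define G' where "G' p = real_of_ereal (bU shB (\<lambda>p. F (shB p)) p)" for p
  have Gm: "G \<in> borel_measurable (PS :: (int \<Rightarrow> 'f) measure)"
    unfolding G_def using bU_meas(1)[OF T1 Fm] unfolding \<mu>_def by simp
  have G'm: "G' \<in> borel_measurable (PS :: (int \<Rightarrow> 'f) measure)"
    unfolding G'_def using bU_meas(1)[OF T2 FBm] unfolding \<mu>_def by simp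
  have Gb: "\<bar>G p\<bar> \<le> \<bar>K\<bar>" for p unfolding G_def by (rule realU_bound[where f=F and K=K, OF Fb])
  have G'b: "\<bar>G' p\<bar> \<le> \<bar>K\<bar>" for p unfolding G'_def by (rule realU_bound[where f="\<lambda>p. F (shB p)" and K=K, OF FBb])
  have Fb': "\<bar>F p\<bar> \<le> \<bar>K\<bar>" for p using Fb[of p] by simp
  have Ginv: "G (shiftZ p) = G p" for p unfolding G_def
    using bU_inv[where f=F and K=K and T=shiftZ and x=p, OF Fb] by simp
  have G'inv: "G' (shiftZ p) = G' p" for p
  proof -
    have "bU shB (\<lambda>p. F (shB p)) (shB (shiftZ p)) = bU shB (\<lambda>p. F (shB p)) (shiftZ p)"
      by (rule bU_inv[where f="\<lambda>p. F (shB p)" and K=K, OF FBb])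
    then show ?thesis unfolding G'_def by simp
  qed
  have Iinv: "shiftZ -` I \<inter> space \<mu> = I" "shB -` I \<inter> space \<mu> = I" if "I \<in> inv_sets" for I :: "(int \<Rightarrow> 'f) set"
  proof -
    have s: "shiftZ -` I = I" using that by (simp add: inv_sets_def)
    then show "shiftZ -` I \<inter> space \<mu> = I" by (simp add: sp)
    have "p \<in> I \<longleftrightarrow> shiftZ p \<in> I" for p using s by blast
    then have "shB p \<in> I \<longleftrightarrow> p \<in> I" for p using shB_shiftZ(2)[of p] by metis
    then show "shB -` I \<inter> space \<mu> = I" by (auto simp: sp)
  qed
  have Ims: "I \<in> sets \<mu>" if "I \<in> inv_sets" for I :: "(int \<Rightarrow> 'f) set"
    using that unfolding \<mu>_def by (simp add: inv_sets_def)
  have eq1: "(\<integral>p. indicator I p * G p \<partial>\<mu>) = (\<integral>p. indicator I p * F p \<partial>\<mu>)" if I: "I \<in> inv_sets" for I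
    unfolding G_def by (rule birkhoff_int[where f=F and K=K, OF P T1 inv1 Fm Fb Ims[OF I] Iinv(1)[OF I]])
  have eq2: "(\<integral>p. indicator I p * G' p \<partial>\<mu>) = (\<integral>p. indicator I p * F p \<partial>\<mu>)" if I: "I \<in> inv_sets" for I
  proof -
    have "(\<integral>p. indicator I p * G' p \<partial>\<mu>) = (\<integral>p. indicator I p * F (shB p) \<partial>\<mu>)"
      unfolding G'_def by (rule birkhoff_int[where f="\<lambda>p. F (shB p)" and K=K, OF P T2 inv2 FBm FBb Ims[OF I] Iinv(2)[OF I]])
    also have "\<dots> = (\<integral>p. indicator I (shB p) * F (shB p) \<partial>\<mu>)"
    proof -
      have "shB p \<in> I \<longleftrightarrow> p \<in> I" for p using Iinv(2)[OF I] by (auto simp: sp)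
      then show ?thesis by (simp add: indicator_def)
    qed
    also have "\<dots> = (\<integral>p. indicator I p * F p \<partial>distr \<mu> \<mu> shB)"
      by (rule integral_distr[symmetric, OF T2]) (use Fm Ims[OF I] in measurable)
    finally show ?thesis using inv2 by simp
  qed
  have ce1: "AE \<omega> in M. real_cond_exp M (inv_sigma M X) (\<lambda>\<omega>. F (\<lambda>t. X t \<omega>)) \<omega> = G (\<lambda>t. X t \<omega>)"
    by (rule cond_exp_ident[where B="\<bar>K\<bar>", OF M X F Fb' Gm Gb Ginv]) (use eq1 in \<open>simp add: \<mu>_def\<close>)
  have ce2: "AE \<omega> in M. real_cond_exp M (inv_sigma M X) (\<lambda>\<omega>. F (\<lambda>t. X t \<omega>)) \<omega> = G' (\<lambda>t. X t \<omega>)"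
    by (rule cond_exp_ident[where B="\<bar>K\<bar>", OF M X F Fb' G'm G'b G'inv]) (use eq2 in \<open>simp add: \<mu>_def\<close>)
  have c1: "AE p in \<mu>. (\<lambda>n. bA shiftZ F n p) \<longlonglongrightarrow> G p"
    unfolding G_def by (rule birkhoff_AE[where f=F and K=K, OF P T1 inv1 Fm Fb])
  have c2: "AE p in \<mu>. (\<lambda>n. bA shB (\<lambda>p. F (shB p)) n p) \<longlonglongrightarrow> G' p"
    unfolding G'_def by (rule birkhoff_AE[where f="\<lambda>p. F (shB p)" and K=K, OF P T2 inv2 FBm FBb])
  have c1': "AE \<omega> in M. (\<lambda>n. bA shiftZ F n (\<lambda>t. X t \<omega>)) \<longlonglongrightarrow> G (\<lambda>t. X t \<omega>)"
    using AE_distrD[OF Xp c1[unfolded \<mu>_def]] .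
  have c2': "AE \<omega> in M. (\<lambda>n. bA shB (\<lambda>p. F (shB p)) n (\<lambda>t. X t \<omega>)) \<longlonglongrightarrow> G' (\<lambda>t. X t \<omega>)"
    using AE_distrD[OF Xp c2[unfolded \<mu>_def]] .
  show ?thesis using ce1 ce2 c1' c2' by eventually_elim simp
qed

lemma det_A1:
  fixes l bb :: "nat \<Rightarrow> real"
  assumes l0: "\<And>i. l i \<ge> 0" and b0: "\<And>i. bb i \<ge> 0"
    and lim: "limsup (\<lambda>n. ereal (root n (\<Prod>i=1..n. l i))) < 1"
    and ev: "\<And>m. eventually (\<lambda>i. logp (bb i) \<le> real i / real (Suc m)) sequentially"
  shows "\<exists>C1\<ge>1. (\<forall>j\<ge>C1. (\<Prod>i=1..j. l i) \<le> 1 - 1 / real C1) \<and>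
     ennreal (bb 1) + (\<Sum>i. ennreal ((\<Prod>k=1..i+1. l k) * bb (i + 2))) \<le> ennreal (real C1)"
proof -
  define P where "P n = (\<Prod>i=1..n. l i)" for n
  have P0: "P n \<ge> 0" for n unfolding P_def using l0 by (simp add: prod_nonneg)
  obtain r where r: "limsup (\<lambda>n. ereal (root n (P n))) < ereal r" "ereal r < 1"
    using ereal_dense2[OF lim[folded P_def]] by blast
  define r' where "r' = max r (1/2)"
  have r'pos: "0 < r'" and r'1: "r' < 1" using r(2) by (auto simp: r'_def)
  have r'L: "limsup (\<lambda>n. ereal (root n (P n))) < ereal r'"
    using r(1) by (rule order.strict_trans2) (simp add: r'_def)
  have ev1: "eventually (\<lambda>n. ereal (root n (P n)) < ereal r') sequentially"
    using Limsup_lessD[OF r'L] .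
  have ev2: "eventually (\<lambda>n. P n < r' ^ n) sequentially"
  proof -
    have "eventually (\<lambda>n. n \<ge> 1 \<and> ereal (root n (P n)) < ereal r') sequentially"
      using ev1 eventually_ge_at_top[of 1] by eventually_elim simp
    then show ?thesis
    proof eventually_elim
      case (elim n)
      then have n: "0 < n" "root n (P n) < r'" by auto
      have "P n = root n (P n) ^ n" using n(1) P0[of n] by simp
      also have "\<dots> < r' ^ n" using n by (intro power_strict_mono) (auto intro: real_root_ge_zero P0)
      finally show ?case .
    qed
  qed
  define s where "s = (1 + r') / 2"
  define q where "q = s / r'"
  have s1: "s < 1" and s0: "0 < s" using r'1 r'pos by (auto simp: s_def)
  have q1: "1 < q" using r'1 r'pos by (auto simp: q_def s_def field_simps)
  have rq: "r' * q = s" using r'pos by (simp add: q_def)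
  obtain n0 :: nat where n0: "n0 > 0" "inverse (real n0) < ln q"
    using ex_inverse_of_nat_less[of "ln q"] q1 by auto
  define m where "m = n0 - 1"
  have Sm: "real (Suc m) = real n0" using n0 by (simp add: m_def)
  have bbq: "eventually (\<lambda>i. bb i \<le> q ^ i) sequentially"
    using ev[of m]
  proof eventually_elim
    case (elim i)
    have "bb i \<le> max (bb i) 1" by simp
    also have "\<dots> = exp (logp (bb i))" unfolding logp_def by simp
    also have "\<dots> \<le> exp (real i / real n0)" using elim Sm by simp
    also have "\<dots> \<le> exp (real i * ln q)"
    proof -
      have "real i / real n0 = real i * inverse (real n0)" by (simp add: field_simps)
      also have "\<dots> \<le> real i * ln q" using n0 by (intro mult_left_mono) auto
      finally show ?thesis by simp
    qed
    also have "\<dots> = q ^ i" using q1 by (simp add: exp_of_nat_mult)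
    finally show ?case .
  qed
  define tm where "tm i = P (i + 1) * bb (i + 2)" for i
  have tm0: "tm i \<ge> 0" for i unfolding tm_def using P0 b0 by simp
  obtain N1 where N1: "\<And>n. n \<ge> N1 \<Longrightarrow> P n < r' ^ n" using ev2 unfolding eventually_sequentially by blast
  obtain N2 where N2: "\<And>n. n \<ge> N2 \<Longrightarrow> bb n \<le> q ^ n" using bbq unfolding eventually_sequentially by blast
  have tmb: "eventually (\<lambda>i. norm (tm i) \<le> r' * q^2 * s ^ i) sequentially"
  proof (rule eventually_sequentiallyI[of "N1 + N2"])
    fix i assume i: "N1 + N2 \<le> i"
    have "tm i \<le> r' ^ (i + 1) * q ^ (i + 2)"
      unfolding tm_def using N1[of "i+1"] N2[of "i+2"] i P0 b0 q1 r'pos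
      by (intro mult_mono) auto
    also have "\<dots> = r' * q^2 * (r' * q) ^ i" by (simp add: power_add power_mult_distrib power2_eq_square algebra_simps)
    also have "\<dots> = r' * q^2 * s ^ i" by (simp add: rq)
    finally show "norm (tm i) \<le> r' * q^2 * s ^ i" using tm0[of i] by simp
  qed
  have sumg: "summable (\<lambda>i. r' * q^2 * s ^ i)"
    using s0 s1 by (intro summable_mult summable_geometric) simp
  have smt: "summable tm" by (rule summable_comparison_test_ev[OF tmb sumg])
  define tot where "tot = bb 1 + suminf tm"
  have "ennreal (bb 1) + (\<Sum>i. ennreal ((\<Prod>k=1..i+1. l k) * bb (i + 2))) = ennreal (bb 1) + (\<Sum>i. ennreal (tm i))"
    unfolding tm_def P_def by simp
  also have "\<dots> = ennreal tot"
    unfolding tot_def using suminf_ennreal2[OF tm0 smt] b0[of 1] suminf_nonneg[OF smt tm0] by simp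
  finally have tot: "ennreal (bb 1) + (\<Sum>i. ennreal ((\<Prod>k=1..i+1. l k) * bb (i + 2))) = ennreal tot" .
  have "eventually (\<lambda>n. r' ^ n < 1/2) sequentially"
    using LIMSEQ_power_zero[of r'] r'pos r'1 by (intro order_tendstoD(2)) auto
  then have "eventually (\<lambda>n. P n \<le> 1/2) sequentially"
    using ev2 by eventually_elim simp
  then obtain N3 where N3: "\<And>n. n \<ge> N3 \<Longrightarrow> P n \<le> 1/2" unfolding eventually_sequentially by blast
  define C1 where "C1 = max (max N3 2) (nat \<lceil>tot\<rceil>)"
  have C2: "C1 \<ge> 2" unfolding C1_def by simp
  show ?thesis
  proof (intro exI[of _ C1] conjI allI impI)
    show "1 \<le> C1" using C2 by simp
    fix j assume j: "C1 \<le> j"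
    have "1 / real C1 \<le> 1 / 2" using C2 by (simp add: field_simps)
    moreover have "P j \<le> 1/2" using N3[of j] j unfolding C1_def by simp
    ultimately show "(\<Prod>i=1..j. l i) \<le> 1 - 1 / real C1"
      unfolding P_def by linarith
  next
    have "tot \<le> real (nat \<lceil>tot\<rceil>)" by linarith
    also have "\<dots> \<le> real C1" unfolding C1_def by simp
    finally show "ennreal (bb 1) + (\<Sum>i. ennreal ((\<Prod>k=1..i+1. l k) * bb (i + 2))) \<le> ennreal (real C1)"
      unfolding tot by (rule ennreal_leI)
  qed
qed

lemma marginal:
  assumes M: "prob_space M" and X: "\<And>t. X t \<in> measurable M borel" and st: "stationary M X"
    and B: "B \<in> sets (borel :: 'f::topological_space measure)"
  shows "measure M {\<omega>\<in>space M. (X :: int \<Rightarrow> 'a \<Rightarrow> 'f) t \<omega> \<in> B} = measure M {\<omega>\<in>space M. X 0 \<omega> \<in> B}"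
proof -
  have S: "(\<lambda>p. p 0) -` B \<inter> space (PS :: (int \<Rightarrow> 'f) measure) \<in> sets PS"
    by (rule measurable_sets[OF measurable_component_singleton[where i=0 and I=UNIV and M="\<lambda>_::int. borel :: 'f measure"] B]) simp
  have eq: "measure (distr M PS (\<lambda>\<omega> t'. X (t' + s) \<omega>)) ((\<lambda>p. p 0) -` B \<inter> space (PS :: (int \<Rightarrow> 'f) measure))
      = measure M {\<omega>\<in>space M. X s \<omega> \<in> B}" for s
    using measure_distr[OF path_meas[where X=X and M=M and s=s, OF X] S] by (simp add: vimage_def Int_def conj_commute)
  show ?thesis using eq[of t] eq[of 0] stat_shift[where X=X and M=M and s=t, OF M X st] by simp
qed

lemma count_bound:
  fixes z :: real
  shows "(\<Sum>i. (if real i < z then 1 else 0 :: ennreal)) \<le> ennreal (max z 0 + 1)"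
proof -
  define N where "N = nat \<lceil>z\<rceil>"
  have "(\<Sum>i. (if real i < z then 1 else 0 :: ennreal)) = (\<Sum>i\<in>{..<N}. (if real i < z then 1 else 0 :: ennreal))"
  proof (rule suminf_finite)
    fix i assume "i \<notin> {..<N}"
    moreover have "i < N" if "real i < z"
    proof -
      have "real_of_int (int i) < real_of_int \<lceil>z\<rceil>" using that le_of_int_ceiling[of z] by linarith
      then have "int i < \<lceil>z\<rceil>" by (simp only: of_int_less_iff)
      then show ?thesis unfolding N_def by simp
    qed
    ultimately show "(if real i < z then 1 else 0 :: ennreal) = 0" by auto
  qed simp
  also have "\<dots> \<le> (\<Sum>i\<in>{..<N}. (1 :: ennreal))" by (intro sum_mono) auto
  also have "\<dots> = ennreal (real N)" by (simp add: ennreal_of_nat_eq_real_of_nat)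
  also have "\<dots> \<le> ennreal (max z 0 + 1)" unfolding N_def by (intro ennreal_leI) linarith
  finally show ?thesis .
qed

lemma logp_nonneg: "logp u \<ge> 0" unfolding logp_def by simp

lemma bc_log:
  assumes M: "prob_space M" and X: "\<And>t. X t \<in> measurable M borel" and st: "stationary M X"
    and bm: "(b :: 'f::topological_space \<Rightarrow> real) \<in> borel_measurable borel"
    and bl: "integrable M (\<lambda>\<omega>. logp (b (X 0 \<omega>)))"
  shows "AE \<omega> in M. eventually (\<lambda>i. logp (b (X (- int i) \<omega>)) \<le> real i / real (Suc m)) sequentially"
proof -
  interpret prob_space M by fact
  have [measurable]: "X t \<in> measurable M borel" for t by (rule X)
  have [measurable]: "b \<in> borel_measurable borel" by (rule bm)
  have lm[measurable]: "logp \<in> borel_measurable borel" unfolding logp_def by measurable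
  define c where "c = real (Suc m)"
  have c0: "c > 0" by (simp add: c_def)
  define A where "A i = {\<omega>\<in>space M. real i / c < logp (b (X (- int i) \<omega>))}" for i
  define A0 where "A0 i = {\<omega>\<in>space M. real i / c < logp (b (X 0 \<omega>))}" for i
  have Am[measurable]: "A i \<in> sets M" for i unfolding A_def by measurable
  have A0m[measurable]: "A0 i \<in> sets M" for i unfolding A0_def by measurable
  have mA: "measure M (A i) = measure M (A0 i)" for i
  proof -
    have "{y. real i / c < logp (b y)} \<in> sets (borel :: 'f measure)" by measurable
    from marginal[where X=X and M=M and t="- int i", OF M X st this] show ?thesis
      unfolding A_def A0_def by simp
  qed
  have ind: "indicator (A0 i) \<omega> = (if real i < logp (b (X 0 \<omega>)) * c then 1 else 0 :: ennreal)" if "\<omega> \<in> space M" for i \<omega>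
    using that c0 by (auto simp: A0_def indicator_def field_simps)
  have "(\<Sum>i. ennreal (measure M (A0 i))) = (\<Sum>i. emeasure M (A0 i))"
    by (simp add: emeasure_eq_measure)
  also have "\<dots> = (\<Sum>i. (\<integral>\<^sup>+\<omega>. indicator (A0 i) \<omega> \<partial>M))" by simp
  also have "\<dots> = (\<integral>\<^sup>+\<omega>. (\<Sum>i. indicator (A0 i) \<omega>) \<partial>M)"
    by (rule nn_integral_suminf[symmetric]) simp
  also have "\<dots> \<le> (\<integral>\<^sup>+\<omega>. ennreal (logp (b (X 0 \<omega>)) * c + 1) \<partial>M)"
  proof (rule nn_integral_mono)
    fix \<omega> assume \<omega>: "\<omega> \<in> space M"
    have "(\<Sum>i. indicator (A0 i) \<omega>) = (\<Sum>i. (if real i < logp (b (X 0 \<omega>)) * c then 1 else 0 :: ennreal))"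
      using ind[OF \<omega>] by simp
    also have "\<dots> \<le> ennreal (max (logp (b (X 0 \<omega>)) * c) 0 + 1)" by (rule count_bound)
    also have "\<dots> = ennreal (logp (b (X 0 \<omega>)) * c + 1)" using logp_nonneg c0 by simp
    finally show "(\<Sum>i. indicator (A0 i) \<omega>) \<le> ennreal (logp (b (X 0 \<omega>)) * c + 1)" .
  qed
  also have "\<dots> = ennreal (\<integral>\<omega>. logp (b (X 0 \<omega>)) * c + 1 \<partial>M)"
    using bl logp_nonneg c0 by (intro nn_integral_eq_integral) auto
  also have "\<dots> < \<top>" by simp
  finally have "(\<Sum>i. ennreal (measure M (A0 i))) \<noteq> \<top>" by simp
  then have "summable (\<lambda>i. measure M (A0 i))" by (intro summable_suminf_not_top) auto
  then have sA: "summable (\<lambda>i. measure M (A i))" using mA by simp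
  have "AE \<omega> in M. eventually (\<lambda>n. \<omega> \<in> space M - A n) sequentially"
    by (rule borel_cantelli_AE1[OF Am _ sA]) (simp add: emeasure_eq_measure)
  then show ?thesis
  proof (rule AE_mp, intro AE_I2 impI)
    fix \<omega> assume \<omega>: "\<omega> \<in> space M" and e: "eventually (\<lambda>n. \<omega> \<in> space M - A n) sequentially"
    from e show "eventually (\<lambda>i. logp (b (X (- int i) \<omega>)) \<le> real i / real (Suc m)) sequentially"
      by eventually_elim (use \<omega> in \<open>auto simp: A_def c_def not_less\<close>)
  qed
qed

lemma sum_0_n: "(\<Sum>i=0..(n::nat). g i) = (\<Sum>i<n. g i) + (g n :: real)"
  by (induction n) auto

lemma sum_1_n: "(\<Sum>i=1..(n::nat). g i) = (\<Sum>i<n. g (Suc i) :: real)"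
  by (induction n) (auto simp: sum.atLeast_Suc_atMost_Suc_shift)

lemma avg_fwd:
  assumes L: "(\<lambda>n. (\<Sum>i<n. g i) / real n) \<longlonglongrightarrow> l" and gb: "\<And>i. \<bar>g i\<bar> \<le> 1"
  shows "(\<lambda>n. (1 / real n) * (\<Sum>i=0..n. g i)) \<longlonglongrightarrow> l"
proof -
  have "(\<lambda>n. g n / real n) \<longlonglongrightarrow> 0"
  proof (rule Lim_null_comparison)
    show "(\<lambda>n. 1 / real n) \<longlonglongrightarrow> 0" by (rule lim_const_over_n)
    show "eventually (\<lambda>n. norm (g n / real n) \<le> 1 / real n) sequentially"
      using gb by (intro always_eventually allI) (simp add: abs_divide divide_right_mono)
  qed
  from tendsto_add[OF L this] show ?thesis
    by (simp add: sum_0_n add_divide_distrib)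
qed

lemma avg_bwd:
  assumes L: "(\<lambda>n. (\<Sum>i<n. g (Suc i)) / real n) \<longlonglongrightarrow> l"
  shows "(\<lambda>n. (1 / real n) * (\<Sum>i=1..n. g i)) \<longlonglongrightarrow> l"
  unfolding sum_1_n using L by simp

lemma xi_meas:
  assumes X: "\<And>t. X t \<in> measurable M borel"
  shows "xi X t \<in> measurable M (RS :: (nat \<Rightarrow> 'f::topological_space) measure)"
  unfolding xi_def by (rule measurable_PiM_single') (auto intro: X)

lemma AC_pred:
  assumes "lam \<in> borel_measurable borel" "b \<in> borel_measurable borel"
    and eta_meas: "(\<lambda>(r, x). eta r x) \<in> borel_measurable (restrict_space borel {0<..} \<Otimes>\<^sub>M (borel :: 'f::topological_space measure))"
    and C1: "C1 \<ge> 1"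
  shows "Measurable.pred (RS :: (nat \<Rightarrow> 'f) measure) (\<lambda>x. x \<in> AC lam b eta C1 C2)"
proof -
  have [measurable]: "Measurable.pred (RS :: (nat \<Rightarrow> 'f) measure) (\<lambda>x. x \<in> A1 lam b C1)"
    by (rule A1_pred) (use assms in auto)
  have [measurable]: "Measurable.pred (RS :: (nat \<Rightarrow> 'f) measure) (\<lambda>x. x \<in> A2 eta C1 C2)"
    by (rule A2_pred[OF eta_meas C1])
  show ?thesis unfolding AC_def by measurable
qed

lemma F0_meas:
  assumes "Measurable.pred (RS :: (nat \<Rightarrow> 'f::topological_space) measure) (\<lambda>x. x \<in> S)"
  shows "(\<lambda>p. indicator S (\<lambda>j. p (- int j)) :: real) \<in> borel_measurable (PS :: (int \<Rightarrow> 'f) measure)"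
proof -
  have m: "(\<lambda>p j. p (- int j)) \<in> measurable (PS :: (int \<Rightarrow> 'f) measure) (RS :: (nat \<Rightarrow> 'f) measure)"
    by (rule measurable_PiM_single') (auto intro: measurable_component_singleton)
  have [measurable]: "Measurable.pred (PS :: (int \<Rightarrow> 'f) measure) (\<lambda>p. (\<lambda>j. p (- int j)) \<in> S)"
    using measurable_comp[OF m assms] by (simp add: comp_def)
  have e: "(\<lambda>p. indicator S (\<lambda>j. p (- int j)) :: real) = (\<lambda>p. if (\<lambda>j. p (- int j)) \<in> S then 1 else 0)"
    by (auto simp: indicator_def)
  show ?thesis unfolding e by measurable
qed

lemma conv_pair:
  assumes M: "prob_space M" and X: "\<And>t. X t \<in> measurable M borel" and st: "stationary M X"
    and SP: "Measurable.pred (RS :: (nat \<Rightarrow> 'f::topological_space) measure) (\<lambda>x. x \<in> S)"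
  shows "AE \<omega> in M.
     (\<lambda>n. (1 / real n) * (\<Sum>i=0..n. indicator S (xi X (int i) \<omega>)))
        \<longlonglongrightarrow> real_cond_exp M (inv_sigma M X) (\<lambda>\<omega>. indicator S (xi X 0 \<omega>)) \<omega> \<and>
     (\<lambda>n. (1 / real n) * (\<Sum>i=1..n. indicator S (xi X (- int i) \<omega>)))
        \<longlonglongrightarrow> real_cond_exp M (inv_sigma M X) (\<lambda>\<omega>. indicator S (xi X 0 \<omega>)) \<omega>"
proof -
  define F where "F p = (indicator S (\<lambda>j. p (- int j)) :: real)" for p :: "int \<Rightarrow> 'f"
  have Fm: "F \<in> borel_measurable (PS :: (int \<Rightarrow> 'f) measure)" unfolding F_def by (rule F0_meas[OF SP])
  have Fb: "\<bar>F p\<bar> \<le> 1" for p unfolding F_def by (simp add: indicator_def)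
  have eqF: "(\<lambda>\<omega>. F (\<lambda>t. X t \<omega>)) = (\<lambda>\<omega>. indicator S (xi X 0 \<omega>))"
    by (auto simp: F_def xi_def)
  have fw: "bA shiftZ F n (\<lambda>t. X t \<omega>) = (\<Sum>i<n. indicator S (xi X (int i) \<omega>)) / real n" for n \<omega>
  proof -
    have "F ((shiftZ ^^ i) (\<lambda>t. X t \<omega>)) = indicator S (xi X (int i) \<omega>)" for i
    proof -
      have "(\<lambda>j. X (- int j + int i) \<omega>) = xi X (int i) \<omega>" by (auto simp: xi_def algebra_simps)
      then show ?thesis by (simp add: F_def shiftZ_pow)
    qed
    then show ?thesis by (simp add: bA_def bS_def)
  qed
  have bw: "bA shB (\<lambda>p. F (shB p)) n (\<lambda>t. X t \<omega>) = (\<Sum>i<n. indicator S (xi X (- int (Suc i)) \<omega>)) / real n" for n \<omega>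
  proof -
    have "F (shB ((shB ^^ i) (\<lambda>t. X t \<omega>))) = indicator S (xi X (- int (Suc i)) \<omega>)" for i
    proof -
      have "(shB ((shB ^^ i) (\<lambda>t. X t \<omega>))) = (\<lambda>t. X (t - int (Suc i)) \<omega>)"
        by (simp add: shB_pow shB_def algebra_simps)
      moreover have "(\<lambda>j. X (- int j - int (Suc i)) \<omega>) = xi X (- int (Suc i)) \<omega>"
        unfolding xi_def by (intro ext arg_cong[where f="\<lambda>t. X t \<omega>"]) simp
      ultimately show ?thesis by (simp only: F_def)
    qed
    then show ?thesis by (simp add: bA_def bS_def)
  qed
  have fb2: "\<bar>indicator S (xi X (int i) \<omega>) :: real\<bar> \<le> 1" for i \<omega> by (simp add: indicator_def)
  have E: "AE \<omega> in M. (\<lambda>n. bA shiftZ F n (\<lambda>t. X t \<omega>)) \<longlonglongrightarrow> real_cond_exp M (inv_sigma M X) (\<lambda>\<omega>. F (\<lambda>t. X t \<omega>)) \<omega>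
      \<and> (\<lambda>n. bA shB (\<lambda>p. F (shB p)) n (\<lambda>t. X t \<omega>)) \<longlonglongrightarrow> real_cond_exp M (inv_sigma M X) (\<lambda>\<omega>. F (\<lambda>t. X t \<omega>)) \<omega>"
    by (rule ergodic_conv[where X=X and M=M and F=F and K=1, OF M X st Fm Fb])
  show ?thesis
  proof (rule AE_mp[OF E], intro AE_I2 impI)
    fix \<omega> assume H: "(\<lambda>n. bA shiftZ F n (\<lambda>t. X t \<omega>)) \<longlonglongrightarrow> real_cond_exp M (inv_sigma M X) (\<lambda>\<omega>. F (\<lambda>t. X t \<omega>)) \<omega>
      \<and> (\<lambda>n. bA shB (\<lambda>p. F (shB p)) n (\<lambda>t. X t \<omega>)) \<longlonglongrightarrow> real_cond_exp M (inv_sigma M X) (\<lambda>\<omega>. F (\<lambda>t. X t \<omega>)) \<omega>"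
    have a: "(\<lambda>n. (\<Sum>i<n. indicator S (xi X (int i) \<omega>)) / real n) \<longlonglongrightarrow> real_cond_exp M (inv_sigma M X) (\<lambda>\<omega>. indicator S (xi X 0 \<omega>)) \<omega>"
      using conjunct1[OF H] unfolding eqF fw .
    have b: "(\<lambda>n. (\<Sum>i<n. indicator S (xi X (- int (Suc i)) \<omega>)) / real n) \<longlonglongrightarrow> real_cond_exp M (inv_sigma M X) (\<lambda>\<omega>. indicator S (xi X 0 \<omega>)) \<omega>"
      using conjunct2[OF H] unfolding eqF bw .
    show "(\<lambda>n. (1 / real n) * (\<Sum>i=0..n. indicator S (xi X (int i) \<omega>)))
        \<longlonglongrightarrow> real_cond_exp M (inv_sigma M X) (\<lambda>\<omega>. indicator S (xi X 0 \<omega>)) \<omega> \<and>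
     (\<lambda>n. (1 / real n) * (\<Sum>i=1..n. indicator S (xi X (- int i) \<omega>)))
        \<longlonglongrightarrow> real_cond_exp M (inv_sigma M X) (\<lambda>\<omega>. indicator S (xi X 0 \<omega>)) \<omega>"
      using avg_fwd[OF a fb2] avg_bwd[where g="\<lambda>i. indicator S (xi X (- int i) \<omega>)", OF b] by simp
  qed
qed

lemma pos_pair:
  assumes M: "prob_space M" and X: "\<And>t. X t \<in> measurable M borel"
    and SP: "Measurable.pred (RS :: (nat \<Rightarrow> 'f::topological_space) measure) (\<lambda>x. x \<in> S)"
  shows "AE \<omega> in M. xi X 0 \<omega> \<in> S \<longrightarrow> 0 < real_cond_exp M (inv_sigma M X) (\<lambda>\<omega>. indicator S (xi X 0 \<omega>)) \<omega>"
proof -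
  interpret prob_space M by fact
  have "finite_measure_subalgebra M (inv_sigma M X)"
    unfolding finite_measure_subalgebra_def finite_measure_subalgebra_axioms_def
    using inv_sigma_subalg[where X=X and M=M, OF X] finite_measure_axioms by simp
  then interpret S: sigma_finite_subalgebra M "inv_sigma M X"
    by (rule finite_measure_subalgebra_is_sigma_finite)
  define f where "f \<omega> = (indicator S (xi X 0 \<omega>) :: real)" for \<omega>
  define \<rho> where "\<rho> = real_cond_exp M (inv_sigma M X) f"
  have xm: "xi X 0 \<in> measurable M (RS :: (nat \<Rightarrow> 'f) measure)" by (rule xi_meas[where X=X and M=M, OF X])
  have [measurable]: "Measurable.pred M (\<lambda>\<omega>. xi X 0 \<omega> \<in> S)"
    using measurable_comp[OF xm SP] by (simp add: comp_def)
  have fm: "f \<in> borel_measurable M"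
  proof -
    have e: "f = (\<lambda>\<omega>. if xi X 0 \<omega> \<in> S then 1 else 0)" by (auto simp: f_def indicator_def)
    show ?thesis unfolding e by measurable
  qed
  have fi: "integrable M f" by (rule bounded_integrable[OF finite_measure_axioms fm, where B=1]) (simp add: f_def indicator_def)
  have \<rho>m: "\<rho> \<in> borel_measurable (inv_sigma M X)" unfolding \<rho>_def by (rule borel_measurable_cond_exp)
  define K where "K = {\<omega> \<in> space M. \<rho> \<omega> \<le> 0}"
  have Km: "K \<in> sets (inv_sigma M X)"
  proof -
    have "{\<omega> \<in> space (inv_sigma M X). \<rho> \<omega> \<le> 0} \<in> sets (inv_sigma M X)" using \<rho>m by measurable
    then show ?thesis unfolding K_def space_inv_sigma .
  qed
  have KmM: "K \<in> sets M" using Km S.subalg by (auto simp: subalgebra_def)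
  have eqi: "(\<integral>x\<in>K. f x \<partial>M) = (\<integral>x\<in>K. \<rho> x \<partial>M)"
    unfolding \<rho>_def by (rule S.real_cond_exp_intA[OF fi Km])
  have \<rho>i: "integrable M \<rho>" unfolding \<rho>_def by (rule S.real_cond_exp_int(1)[OF fi])
  have "(\<integral>x\<in>K. \<rho> x \<partial>M) \<le> 0"
  proof -
    have "0 \<le> (\<integral>x. - (indicator K x * \<rho> x) \<partial>M)"
      by (intro integral_nonneg_AE AE_I2) (auto simp: K_def indicator_def)
    then show ?thesis unfolding set_lebesgue_integral_def by simp
  qed
  moreover have "0 \<le> (\<integral>x\<in>K. f x \<partial>M)"
    unfolding set_lebesgue_integral_def by (intro integral_nonneg_AE AE_I2) (auto simp: f_def indicator_def)
  ultimately have z: "(\<integral>x. indicator K x * f x \<partial>M) = 0" using eqi unfolding set_lebesgue_integral_def by simp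
  have "AE x in M. indicator K x * f x = 0"
  proof -
    have ii: "integrable M (\<lambda>x. indicator K x * f x)" using integrable_mult_indicator[OF KmM fi] by simp
    have nn: "AE x in M. 0 \<le> indicator K x * f x" by (intro AE_I2) (auto simp: f_def indicator_def)
    show ?thesis using integral_nonneg_eq_0_iff_AE[OF ii nn] z by simp
  qed
  then show ?thesis
  proof (rule AE_mp, intro AE_I2 impI)
    fix \<omega> assume \<omega>: "\<omega> \<in> space M" and z: "indicator K \<omega> * f \<omega> = 0" and xin: "xi X 0 \<omega> \<in> S"
    have "f \<omega> = 1" using xin by (simp add: f_def)
    then have "\<omega> \<notin> K" using z by (auto simp: indicator_def)
    then show "0 < real_cond_exp M (inv_sigma M X) (\<lambda>\<omega>. indicator S (xi X 0 \<omega>)) \<omega>"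
      using \<omega> unfolding K_def \<rho>_def f_def by simp
  qed
qed

theorem lemma1:
  fixes M :: "'a measure"
    and X :: "int \<Rightarrow> 'a \<Rightarrow> 'f::polish_space"
    and P :: "'f \<Rightarrow> 'e::polish_space \<Rightarrow> 'e measure"
    and V :: "'e \<Rightarrow> real"
    and lam b :: "'f \<Rightarrow> real"
    and eta :: "real \<Rightarrow> 'f \<Rightarrow> real"
  assumes M: "prob_space M"
    and X_meas: "\<And>t. X t \<in> measurable M borel"
    and P_prob: "\<And>x y. prob_space (P x y)"
    and P_sets: "\<And>x y. sets (P x y) = sets (borel :: 'e measure)"
    and P_meas: "\<And>A. A \<in> sets (borel :: 'e measure) \<Longrightarrow>
        (\<lambda>(x, y). measure (P x y) A) \<in> borel_measurable (borel \<Otimes>\<^sub>M borel)"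
    and A1: "stationary M X"
    and V_meas: "V \<in> borel_measurable borel" and V_pos: "\<And>y. V y > 0"
    and lam_meas: "lam \<in> borel_measurable borel" and lam_nonneg: "\<And>x. lam x \<ge> 0"
    and b_meas: "b \<in> borel_measurable borel" and b_nonneg: "\<And>x. b x \<ge> 0"
    and lam_log: "integrable M (\<lambda>\<omega>. logp (lam (X 0 \<omega>)))"
    and b_log: "integrable M (\<lambda>\<omega>. logp (b (X 0 \<omega>)))"
    and drift: "\<And>x y. (\<integral>\<^sup>+ z. ennreal (V z) \<partial>P x y) \<le> ennreal (lam x * V y + b x)"
    and contr: "AE \<omega> in M.
        limsup (\<lambda>n. ereal (root n (\<Prod>i=1..n. lam (X (- int i) \<omega>)))) < 1"
    and eta_meas: "(\<lambda>(r, x). eta r x) \<in>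
        borel_measurable (restrict_space borel {0<..} \<Otimes>\<^sub>M (borel :: 'f measure))"
    and eta_range: "\<And>r x. r > 0 \<Longrightarrow> 0 < eta r x \<and> eta r x < 1"
    and minor: "\<And>R. R > 0 \<Longrightarrow> \<exists>\<nu> :: 'f \<Rightarrow> 'e measure.
        (\<forall>x. prob_space (\<nu> x) \<and> sets (\<nu> x) = sets (borel :: 'e measure)) \<and>
        (\<forall>A \<in> sets (borel :: 'e measure). (\<lambda>x. measure (\<nu> x) A) \<in> borel_measurable borel) \<and>
        (\<forall>x y A. V y \<le> R \<longrightarrow> A \<in> sets (borel :: 'e measure) \<longrightarrow>
            measure (P x y) A \<ge> eta R x * measure (\<nu> x) A)"
  shows "measure M {\<omega> \<in> space M. xi X 0 \<omega> \<in> (\<Union>C1\<in>{1..}. A1 lam b C1)} = 1 \<and>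
      (\<exists>C1 C2 :: 'a \<Rightarrow> nat.
        C1 \<in> measurable M (count_space UNIV) \<and> C2 \<in> measurable M (count_space UNIV) \<and>
        (\<forall>\<omega> \<in> space M. C1 \<omega> \<ge> 1 \<and> C2 \<omega> \<ge> 1) \<and>
        (AE \<omega> in M.
           (\<lambda>n. (1 / real n) * (\<Sum>i=0..n.
               indicator (AC lam b eta (C1 \<omega>) (C2 \<omega>)) (xi X (int i) \<omega>)))
             \<longlonglongrightarrow> rhoC M X lam b eta (C1 \<omega>) (C2 \<omega>) \<omega> \<and>
           (\<lambda>n. (1 / real n) * (\<Sum>i=1..n.
               indicator (AC lam b eta (C1 \<omega>) (C2 \<omega>)) (xi X (- int i) \<omega>)))
             \<longlonglongrightarrow> rhoC M X lam b eta (C1 \<omega>) (C2 \<omega>) \<omega> \<and>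
           rhoC M X lam b eta (C1 \<omega>) (C2 \<omega>) \<omega> > 0))"
proof -
  interpret prob_space M by (rule M)
  have Xm[measurable]: "X t \<in> measurable M borel" for t by (rule X_meas)
  note [measurable] = lam_meas b_meas
  have xm: "xi X 0 \<in> measurable M (RS :: (nat \<Rightarrow> 'f) measure)" by (rule xi_meas[where X=X and M=M, OF X_meas])
  have A1p[measurable]: "Measurable.pred M (\<lambda>\<omega>. xi X 0 \<omega> \<in> A1 lam b c)" for c
    using measurable_comp[OF xm A1_pred[OF lam_meas b_meas]] by (simp add: comp_def)
  have bc: "AE \<omega> in M. \<forall>m. eventually (\<lambda>i. logp (b (X (- int i) \<omega>)) \<le> real i / real (Suc m)) sequentially"
    unfolding AE_all_countable by (intro allI bc_log[where X=X and M=M and b=b, OF M X_meas A1 b_meas b_log])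
  have P1: "AE \<omega> in M. \<exists>C1\<ge>1. xi X 0 \<omega> \<in> A1 lam b C1"
    using contr bc
  proof eventually_elim
    case (elim \<omega>)
    have "\<exists>C1\<ge>1. (\<forall>j\<ge>C1. (\<Prod>i=1..j. lam (X (- int i) \<omega>)) \<le> 1 - 1 / real C1) \<and>
       ennreal (b (X (- int 1) \<omega>)) + (\<Sum>i. ennreal ((\<Prod>k=1..i+1. lam (X (- int k) \<omega>)) * b (X (- int (i + 2)) \<omega>)))
         \<le> ennreal (real C1)"
      by (rule det_A1[where l="\<lambda>i. lam (X (- int i) \<omega>)" and bb="\<lambda>i. b (X (- int i) \<omega>)"])
         (use lam_nonneg b_nonneg elim in auto)
    then show ?case unfolding A1_def xi_def by simp
  qed
  have set_eq: "{\<omega> \<in> space M. xi X 0 \<omega> \<in> (\<Union>C1\<in>{1..}. A1 lam b C1)} =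
      {\<omega> \<in> space M. \<exists>C1::nat. 1 \<le> C1 \<and> xi X 0 \<omega> \<in> A1 lam b C1}" by auto
  have sm: "{\<omega> \<in> space M. xi X 0 \<omega> \<in> (\<Union>C1\<in>{1..}. A1 lam b C1)} \<in> sets M"
    unfolding set_eq by measurable
  have part1: "measure M {\<omega> \<in> space M. xi X 0 \<omega> \<in> (\<Union>C1\<in>{1..}. A1 lam b C1)} = 1"
  proof -
    have "AE \<omega> in M. \<omega> \<in> {\<omega> \<in> space M. xi X 0 \<omega> \<in> (\<Union>C1\<in>{1..}. A1 lam b C1)}"
      using P1 AE_space by eventually_elim auto
    then show ?thesis using prob_eq_1[OF sm] by simp
  qed
  define \<rho> where "\<rho> c1 c2 = rhoC M X lam b eta c1 c2" for c1 c2
  have \<rho>m[measurable]: "\<rho> c1 c2 \<in> borel_measurable M" for c1 c2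
    unfolding \<rho>_def rhoC_def by (rule borel_measurable_cond_exp2)
  have ACp: "Measurable.pred (RS :: (nat \<Rightarrow> 'f) measure) (\<lambda>x. x \<in> AC lam b eta c1 c2)" if "1 \<le> c1" for c1 c2
    by (rule AC_pred[OF lam_meas b_meas eta_meas that])
  have H1: "AE \<omega> in M. \<forall>c1 c2. 1 \<le> c1 \<longrightarrow>
     ((\<lambda>n. (1 / real n) * (\<Sum>i=0..n. indicator (AC lam b eta c1 c2) (xi X (int i) \<omega>))) \<longlonglongrightarrow> \<rho> c1 c2 \<omega> \<and>
      (\<lambda>n. (1 / real n) * (\<Sum>i=1..n. indicator (AC lam b eta c1 c2) (xi X (- int i) \<omega>))) \<longlonglongrightarrow> \<rho> c1 c2 \<omega>)"
    unfolding AE_all_countable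
  proof (intro allI)
    fix c1 c2 :: nat
    show "AE \<omega> in M. 1 \<le> c1 \<longrightarrow>
     ((\<lambda>n. (1 / real n) * (\<Sum>i=0..n. indicator (AC lam b eta c1 c2) (xi X (int i) \<omega>))) \<longlonglongrightarrow> \<rho> c1 c2 \<omega> \<and>
      (\<lambda>n. (1 / real n) * (\<Sum>i=1..n. indicator (AC lam b eta c1 c2) (xi X (- int i) \<omega>))) \<longlonglongrightarrow> \<rho> c1 c2 \<omega>)"
    proof (cases "1 \<le> c1")
      case True
      show ?thesis
        using conv_pair[where X=X and M=M and S="AC lam b eta c1 c2", OF M X_meas A1 ACp[OF True]]
        unfolding \<rho>_def rhoC_def by (auto elim!: AE_mp intro!: AE_I2)
    qed simp
  qed
  have H2: "AE \<omega> in M. \<forall>c1 c2. 1 \<le> c1 \<longrightarrow> xi X 0 \<omega> \<in> AC lam b eta c1 c2 \<longrightarrow> 0 < \<rho> c1 c2 \<omega>"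
    unfolding AE_all_countable
  proof (intro allI)
    fix c1 c2 :: nat
    show "AE \<omega> in M. 1 \<le> c1 \<longrightarrow> xi X 0 \<omega> \<in> AC lam b eta c1 c2 \<longrightarrow> 0 < \<rho> c1 c2 \<omega>"
    proof (cases "1 \<le> c1")
      case True
      show ?thesis
        using pos_pair[where X=X and M=M and S="AC lam b eta c1 c2", OF M X_meas ACp[OF True]]
        unfolding \<rho>_def rhoC_def by (auto elim!: AE_mp intro!: AE_I2)
    qed simp
  qed
  have H3: "AE \<omega> in M. \<exists>c1\<ge>1. \<exists>c2\<ge>1. xi X 0 \<omega> \<in> AC lam b eta c1 c2"
    using P1
  proof eventually_elim
    case (elim \<omega>)
    then obtain c1 where c1: "1 \<le> c1" "xi X 0 \<omega> \<in> A1 lam b c1" by blast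
    define r where "r = 2 * real c1 * (2 * real c1 + 1)"
    have r0: "r > 0" using c1 by (simp add: r_def)
    define e where "e = eta r (X 0 \<omega>)"
    have e0: "0 < e" using eta_range[OF r0] by (simp add: e_def)
    define c2 where "c2 = nat \<lceil>1 / e\<rceil> + 1"
    have "1 / e \<le> real c2" unfolding c2_def by linarith
    then have "1 \<le> e * (real c2 + 1)" using e0 by (simp add: field_simps)
    then have "1 / (real c2 + 1) \<le> e" by (simp add: field_simps)
    then have "xi X 0 \<omega> \<in> A2 eta c1 c2" unfolding A2_def xi_def e_def r_def by simp
    then show ?case using c1 by (intro exI[of _ c1] exI[of _ c2]) (auto simp: AC_def c2_def)
  qed
  define Q where "Q n \<omega> = (1 \<le> fst (prod_decode n) \<and> 1 \<le> snd (prod_decode n) \<and>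
      0 < \<rho> (fst (prod_decode n)) (snd (prod_decode n)) \<omega>)" for n \<omega>
  have Qm[measurable]: "Measurable.pred M (Q n)" for n unfolding Q_def by measurable
  define C1 where "C1 \<omega> = (if \<exists>n. Q n \<omega> then fst (prod_decode (LEAST n. Q n \<omega>)) else 1)" for \<omega>
  define C2 where "C2 \<omega> = (if \<exists>n. Q n \<omega> then snd (prod_decode (LEAST n. Q n \<omega>)) else 1)" for \<omega>
  have Lm: "(\<lambda>\<omega>. LEAST n. Q n \<omega>) \<in> measurable M (count_space UNIV)"
    by (rule measurable_Least) simp
  have C1m: "C1 \<in> measurable M (count_space UNIV)"
  proof -
    have a: "(\<lambda>\<omega>. fst (prod_decode (LEAST n. Q n \<omega>))) \<in> measurable M (count_space UNIV)"
      using measurable_comp[OF Lm, of "\<lambda>n. fst (prod_decode n)" "count_space UNIV"] by (simp add: comp_def)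
    have s: "{\<omega> \<in> space M. \<exists>n. Q n \<omega>} \<in> sets M" by measurable
    show ?thesis unfolding C1_def by (rule measurable_If[OF a measurable_const s]) simp
  qed
  have C2m: "C2 \<in> measurable M (count_space UNIV)"
  proof -
    have a: "(\<lambda>\<omega>. snd (prod_decode (LEAST n. Q n \<omega>))) \<in> measurable M (count_space UNIV)"
      using measurable_comp[OF Lm, of "\<lambda>n. snd (prod_decode n)" "count_space UNIV"] by (simp add: comp_def)
    have s: "{\<omega> \<in> space M. \<exists>n. Q n \<omega>} \<in> sets M" by measurable
    show ?thesis unfolding C2_def by (rule measurable_If[OF a measurable_const s]) simp
  qed
  have Cge: "\<forall>\<omega>\<in>space M. C1 \<omega> \<ge> 1 \<and> C2 \<omega> \<ge> 1"
  proof
    fix \<omega> assume "\<omega> \<in> space M"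
    show "C1 \<omega> \<ge> 1 \<and> C2 \<omega> \<ge> 1"
    proof (cases "\<exists>n. Q n \<omega>")
      case True
      then have "Q (LEAST n. Q n \<omega>) \<omega>" by (rule LeastI_ex)
      then show ?thesis using True unfolding C1_def C2_def Q_def by simp
    qed (simp add: C1_def C2_def)
  qed
  have part2: "AE \<omega> in M.
           (\<lambda>n. (1 / real n) * (\<Sum>i=0..n.
               indicator (AC lam b eta (C1 \<omega>) (C2 \<omega>)) (xi X (int i) \<omega>)))
             \<longlonglongrightarrow> rhoC M X lam b eta (C1 \<omega>) (C2 \<omega>) \<omega> \<and>
           (\<lambda>n. (1 / real n) * (\<Sum>i=1..n.
               indicator (AC lam b eta (C1 \<omega>) (C2 \<omega>)) (xi X (- int i) \<omega>)))
             \<longlonglongrightarrow> rhoC M X lam b eta (C1 \<omega>) (C2 \<omega>) \<omega> \<and>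
           rhoC M X lam b eta (C1 \<omega>) (C2 \<omega>) \<omega> > 0"
    using H1 H2 H3
  proof eventually_elim
    case (elim \<omega>)
    from elim(3) obtain c1 c2 where c: "1 \<le> c1" "1 \<le> c2" "xi X 0 \<omega> \<in> AC lam b eta c1 c2" by blast
    have "Q (prod_encode (c1, c2)) \<omega>" using c elim(2) unfolding Q_def by simp
    then have ex: "\<exists>n. Q n \<omega>" by blast
    then have q: "Q (LEAST n. Q n \<omega>) \<omega>" by (rule LeastI_ex)
    have e1: "C1 \<omega> = fst (prod_decode (LEAST n. Q n \<omega>))" using ex by (simp add: C1_def)
    have e2: "C2 \<omega> = snd (prod_decode (LEAST n. Q n \<omega>))" using ex by (simp add: C2_def)
    have ge: "1 \<le> C1 \<omega>" and pos: "0 < \<rho> (C1 \<omega>) (C2 \<omega>) \<omega>" using q unfolding Q_def e1 e2 by simp_all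
    show ?case using elim(1) ge pos unfolding \<rho>_def by blast
  qed
  show ?thesis
    using part1 C1m C2m Cge part2 by blast
qed

end
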